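(* Let $1 \le p < \infty$. Then $J_n$ is the unique Chebyshev center of $\Omega_n$ relative to the metric space $(\Omega_n,\|\cdot\|_{\mathcal{S}_p})$ (i.e. the unique $D\in\Omega_n$ minimizing $\sup_{B\in\Omega_n}\|D-B\|_{\mathcal{S}_p}$), and the corresponding Chebyshev radius is $$ \inf_{D\in \Omega_n}\sup_{B\in\Omega_n}\|D-B\|_{\mathcal{S}_p} = (n-1)^{1/p}. $$
   Context: $\Omega_n$ denotes the set of $n\times n$ doubly stochastic matrices (nonnegative real entries, all row and column sums equal to $1$). $J_n$ is the $n\times n$ matrix with all entries equal to $1/n$. For $p\ge1$, $\|A\|_{\mathcal{S}_p} := \big(\sum_{i=1}^n\sigma_i(A)^p\big)^{1/p}$ where $\sigma_i(A)$ are the singular values of $A$. Given a constraint set $\mathcal{R}\subseteq M_n(\mathbb{R})$ and a norm, the Chebyshev radius of $\Omega_n$ is $\inf_{A\in\mathcal{R}}\sup_{B\in\Omega_n}\|A-B\|$ and a Chebyshev center is any $A\in\mathcal{R}$ attaining this infimum; "relative to the metric space $(\Omega_n,\|\cdot\|)$" means $\mathcal{R}=\Omega_n$. *)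

theory Defs
  imports Jordan_Normal_Form.Char_Poly
begin

definition doubly_stochastic :: "nat \<Rightarrow> real mat set" where
  "doubly_stochastic n = {A. A \<in> carrier_mat n n \<and>
     (\<forall>i<n. \<forall>j<n. A $$ (i,j) \<ge> 0) \<and>
     (\<forall>i<n. (\<Sum>j<n. A $$ (i,j)) = 1) \<and>
     (\<forall>j<n. (\<Sum>i<n. A $$ (i,j)) = 1)}"

definition J_mat :: "nat \<Rightarrow> real mat" where
  "J_mat n = mat n n (\<lambda>_. 1 / real n)"

text \<open>Singular values (with multiplicity): square roots of the eigenvalues of A^T A,
  i.e. of the roots (with multiplicity) of its characteristic polynomial, which
  splits over the reals since A^T A is symmetric positive semidefinite.\<close>
definition singular_values :: "real mat \<Rightarrow> real multiset" where
  "singular_values A = image_mset sqrt (proots (char_poly (transpose_mat A * A)))"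

definition schatten_norm :: "real \<Rightarrow> real mat \<Rightarrow> real" where
  "schatten_norm p A = (\<Sum>s\<in>#singular_values A. s powr p) powr (1 / p)"

definition cheb_dist :: "nat \<Rightarrow> real \<Rightarrow> real mat \<Rightarrow> real" where
  "cheb_dist n p D = (SUP B\<in>doubly_stochastic n. schatten_norm p (D - B))"

end

theory Submission
  imports Defs "Jordan_Normal_Form.Schur_Decomposition"
begin

lemma ev_vec:
  fixes A :: "'a::field mat"
  assumes A: "A \<in> carrier_mat n n" and r: "poly (char_poly A) k = 0"
  shows "\<exists>v. v \<in> carrier_vec n \<and> v \<noteq> 0\<^sub>v n \<and> A *\<^sub>v v = k \<cdot>\<^sub>v v"
proof -
  have "eigenvalue A k" using eigenvalue_root_char_poly[OF A] r by simp
  then show ?thesis using A unfolding eigenvalue_def eigenvector_def by auto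
qed

lemma sym_eig_real:
  fixes N :: "real mat" and a :: complex
  assumes N: "N \<in> carrier_mat n n" and sym: "N\<^sup>T = N"
    and r: "poly (char_poly (map_mat complex_of_real N)) a = 0"
  shows "Im a = 0"
proof -
  let ?Nc = "map_mat complex_of_real N"
  have Nc: "?Nc \<in> carrier_mat n n" using N by simp
  obtain v where v: "v \<in> carrier_vec n" "v \<noteq> 0\<^sub>v n" "?Nc *\<^sub>v v = a \<cdot>\<^sub>v v"
    using ev_vec[OF Nc r] by blast
  have symN: "\<And>i j. i < n \<Longrightarrow> j < n \<Longrightarrow> N $$ (i,j) = N $$ (j,i)"
    using sym N by (metis carrier_matD index_transpose_mat(1))
  define S where "S = (\<Sum>i<n. (\<Sum>j<n. complex_of_real (N $$ (i,j)) * v $ j) * cnj (v $ i))"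
  define T where "T = (\<Sum>i<n. v $ i * cnj (v $ i))"
  have comp: "\<And>i. i < n \<Longrightarrow> (\<Sum>j<n. complex_of_real (N $$ (i,j)) * v $ j) = a * v $ i"
  proof -
    fix i assume i: "i < n"
    have "(?Nc *\<^sub>v v) $ i = (a \<cdot>\<^sub>v v) $ i" using v(3) by simp
    then show "(\<Sum>j<n. complex_of_real (N $$ (i,j)) * v $ j) = a * v $ i"
      using i N v(1) by (simp add: scalar_prod_def atLeast0LessThan)
  qed
  have ST: "S = a * T" unfolding S_def T_def
    by (simp add: comp sum_distrib_left mult.assoc)
  have "cnj S = (\<Sum>i<n. (\<Sum>j<n. complex_of_real (N $$ (i,j)) * cnj (v $ j)) * v $ i)"
    unfolding S_def by (simp add: sum_distrib_right)
  also have "\<dots> = (\<Sum>i<n. \<Sum>j<n. complex_of_real (N $$ (i,j)) * cnj (v $ j) * v $ i)"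
    by (simp add: sum_distrib_right)
  also have "\<dots> = (\<Sum>j<n. \<Sum>i<n. complex_of_real (N $$ (i,j)) * cnj (v $ j) * v $ i)"
    by (rule sum.swap)
  also have "\<dots> = (\<Sum>j<n. \<Sum>i<n. complex_of_real (N $$ (j,i)) * v $ i * cnj (v $ j))"
    by (intro sum.cong refl) (simp add: symN mult.commute mult.left_commute)
  also have "\<dots> = S" unfolding S_def by (simp add: sum_distrib_right)
  finally have cS: "cnj S = S" .
  have Treal: "T = complex_of_real (\<Sum>i<n. (cmod (v $ i))\<^sup>2)"
    unfolding T_def of_real_sum by (intro sum.cong refl) (metis complex_norm_square)
  obtain i where i: "i < n" "v $ i \<noteq> 0" using v(1,2) by (metis carrier_vecD eq_vecI index_zero_vec(1) index_zero_vec(2))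
  have pos: "(\<Sum>i<n. (cmod (v $ i))\<^sup>2) > 0"
  proof -
    have "(cmod (v $ i))\<^sup>2 \<le> (\<Sum>i<n. (cmod (v $ i))\<^sup>2)"
      by (rule member_le_sum) (use i in auto)
    moreover have "(cmod (v $ i))\<^sup>2 > 0" using i by simp
    ultimately show ?thesis by linarith
  qed
  have T0: "T \<noteq> 0" unfolding Treal using pos by (simp only: of_real_eq_0_iff)
  have cT: "cnj T = T" by (simp add: Treal)
  have "cnj a * T = a * T" using cS ST cT by (metis complex_cnj_mult)
  then have "cnj a = a" using T0 by simp
  from arg_cong[OF this, of Im] show ?thesis by simp
qed

lemma real_sym_splits:
  fixes N :: "real mat"
  assumes N: "N \<in> carrier_mat n n" and sym: "N\<^sup>T = N"
  shows "\<exists>rs. char_poly N = (\<Prod>r\<leftarrow>rs. [:-r,1:]) \<and> length rs = n"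
proof -
  let ?Nc = "map_mat complex_of_real N"
  have Nc: "?Nc \<in> carrier_mat n n" using N by simp
  obtain as where as: "char_poly ?Nc = (\<Prod>a\<leftarrow>as. [:-a,1:])" "length as = n"
    using char_poly_factorized[OF Nc] by blast
  have re: "\<And>a. a \<in> set as \<Longrightarrow> a = complex_of_real (Re a)"
  proof -
    fix a assume a: "a \<in> set as"
    have "poly (char_poly ?Nc) a = 0" unfolding as(1)
      using a by (auto simp: poly_prod_list prod_list_zero_iff)
    then have "Im a = 0" using sym_eig_real[OF N sym] by blast
    then show "a = complex_of_real (Re a)" by (simp add: complex_eq_iff)
  qed
  define rs where "rs = map Re as"
  interpret h: map_poly_inj_comm_ring_hom "complex_of_real" ..
  have "map_poly complex_of_real (char_poly N) = char_poly ?Nc"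
    by (rule of_real_hom.char_poly_hom[OF N, symmetric])
  also have "\<dots> = (\<Prod>a\<leftarrow>as. [:-a,1:])" by (rule as(1))
  also have "\<dots> = (\<Prod>r\<leftarrow>rs. [:-complex_of_real r,1:])"
    unfolding rs_def map_map o_def using re by (induct as) auto
  also have "\<dots> = map_poly complex_of_real (\<Prod>r\<leftarrow>rs. [:-r,1:])"
    by (simp add: h.hom_prod_list o_def)
  finally have "char_poly N = (\<Prod>r\<leftarrow>rs. [:-r,1:])" by simp
  then show ?thesis using as(2) by (intro exI[of _ rs]) (simp add: rs_def)
qed

definition mtr :: "'a::comm_ring_1 mat \<Rightarrow> 'a" where
  "mtr A = (\<Sum>i<dim_row A. A $$ (i,i))"

lemma mtr_comm:
  fixes X Y :: "'a::comm_ring_1 mat"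
  assumes X: "X \<in> carrier_mat n n" and Y: "Y \<in> carrier_mat n n"
  shows "mtr (X * Y) = mtr (Y * X)"
proof -
  have "mtr (X * Y) = (\<Sum>i<n. \<Sum>j<n. X $$ (i,j) * Y $$ (j,i))"
    unfolding mtr_def using X Y by (simp add: scalar_prod_def atLeast0LessThan)
  also have "\<dots> = (\<Sum>j<n. \<Sum>i<n. X $$ (i,j) * Y $$ (j,i))" by (rule sum.swap)
  also have "\<dots> = mtr (Y * X)"
    unfolding mtr_def using X Y by (simp add: scalar_prod_def atLeast0LessThan mult.commute)
  finally show ?thesis .
qed

lemma mtr_similar_sq:
  fixes N B :: "'a::comm_ring_1 mat"
  assumes N: "N \<in> carrier_mat n n" and s: "similar_mat N B"
  shows "mtr (N * N) = mtr (B * B)"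
proof -
  obtain P Q where w: "similar_mat_wit N B P Q" using s unfolding similar_mat_def by blast
  from w N have P: "P \<in> carrier_mat n n" and Q: "Q \<in> carrier_mat n n" and B: "B \<in> carrier_mat n n"
    and QP: "Q * P = 1\<^sub>m n" and e: "N = P * B * Q"
    unfolding similar_mat_wit_def Let_def by auto
  have "N * N = P * (B * B) * Q"
  proof -
    have "N * N = P * B * (Q * P) * B * Q" unfolding e using P B Q
      by (simp add: assoc_mult_mat[of _ n n _ n _ n])
    also have "\<dots> = P * (B * B) * Q" using P B Q QP
      by (simp add: assoc_mult_mat[of _ n n _ n _ n])
    finally show ?thesis .
  qed
  also have "mtr \<dots> = mtr (Q * (P * (B * B)))"
    by (rule mtr_comm[of _ n]) (use P B Q in auto)
  also have "Q * (P * (B * B)) = (Q * P) * (B * B)" using P B Q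
    by (simp add: assoc_mult_mat[of _ n n _ n _ n])
  also have "\<dots> = B * B" using QP B by simp
  finally show ?thesis .
qed

lemma mtr_upper_sq:
  fixes B :: "'a::comm_ring_1 mat"
  assumes B: "B \<in> carrier_mat n n" and u: "upper_triangular B"
  shows "mtr (B * B) = (\<Sum>i<n. B $$ (i,i) * B $$ (i,i))"
proof -
  have "mtr (B * B) = (\<Sum>i<n. \<Sum>j<n. B $$ (i,j) * B $$ (j,i))"
    unfolding mtr_def using B by (simp add: scalar_prod_def atLeast0LessThan)
  also have "\<dots> = (\<Sum>i<n. \<Sum>j<n. if j = i then B $$ (i,i) * B $$ (i,i) else 0)"
  proof (intro sum.cong refl)
    fix i j assume i: "i \<in> {..<n}" and j: "j \<in> {..<n}"
    show "B $$ (i,j) * B $$ (j,i) = (if j = i then B $$ (i,i) * B $$ (i,i) else 0)"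
      using u B i j unfolding upper_triangular_def
      by (cases "j < i"; cases "i < j") auto
  qed
  also have "\<dots> = (\<Sum>i<n. B $$ (i,i) * B $$ (i,i))" by simp
  finally show ?thesis .
qed

lemma sym_nonzero_ev:
  fixes N :: "real mat"
  assumes N: "N \<in> carrier_mat n n" and sym: "N\<^sup>T = N"
    and nz: "i < n" "j < n" "N $$ (i,j) \<noteq> 0"
  shows "\<exists>\<mu> v. \<mu> \<noteq> 0 \<and> v \<in> carrier_vec n \<and> v \<noteq> 0\<^sub>v n \<and> N *\<^sub>v v = \<mu> \<cdot>\<^sub>v v"
proof (rule ccontr)
  assume no: "\<not> ?thesis"
  obtain rs where rs: "char_poly N = (\<Prod>r\<leftarrow>rs. [:-r,1:])" using real_sym_splits[OF N sym] by blast
  obtain B where B: "B \<in> carrier_mat n n" "upper_triangular B" "similar_mat N B"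
    using schur_decomposition_exists[OF N rs] by blast
  have cpB: "char_poly N = (\<Prod>a\<leftarrow>diag_mat B. [:-a,1:])"
    using char_poly_similar[OF B(3)] char_poly_upper_triangular[OF B(1,2)] by simp
  have d0: "\<And>k. k < n \<Longrightarrow> B $$ (k,k) = 0"
  proof (rule ccontr)
    fix k assume k: "k < n" and ne: "B $$ (k,k) \<noteq> 0"
    have "B $$ (k,k) \<in> set (diag_mat B)" using k B(1) unfolding diag_mat_def by auto
    then have "poly (char_poly N) (B $$ (k,k)) = 0" unfolding cpB
      by (auto simp: poly_prod_list prod_list_zero_iff)
    then obtain v where "v \<in> carrier_vec n \<and> v \<noteq> 0\<^sub>v n \<and> N *\<^sub>v v = B $$ (k,k) \<cdot>\<^sub>v v"
      using ev_vec[OF N] by blast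
    with ne no show False by blast
  qed
  have "mtr (N * N) = 0"
    using mtr_similar_sq[OF N B(3)] mtr_upper_sq[OF B(1,2)] d0 by simp
  moreover have "mtr (N * N) = (\<Sum>a<n. \<Sum>b<n. (N $$ (a,b))\<^sup>2)"
  proof -
    have symN: "\<And>a b. a < n \<Longrightarrow> b < n \<Longrightarrow> N $$ (b,a) = N $$ (a,b)"
      using sym N by (metis carrier_matD index_transpose_mat(1))
    show ?thesis unfolding mtr_def using N
      by (simp add: scalar_prod_def atLeast0LessThan symN power2_eq_square)
  qed
  ultimately have "(\<Sum>a<n. \<Sum>b<n. (N $$ (a,b))\<^sup>2) = 0" by simp
  then have "\<forall>a\<in>{..<n}. (\<Sum>b<n. (N $$ (a,b))\<^sup>2) = 0"
    by (subst (asm) sum_nonneg_eq_0_iff) (auto intro: sum_nonneg)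
  then have "(\<Sum>b<n. (N $$ (i,b))\<^sup>2) = 0" using nz by auto
  then have "(N $$ (i,j))\<^sup>2 = 0" using nz by (subst (asm) sum_nonneg_eq_0_iff) auto
  with nz show False by simp
qed

definition PU :: "nat \<Rightarrow> real vec list \<Rightarrow> real mat" where
  "PU n ws = mat n n (\<lambda>(a,b). (if a = b then 1 else 0) - (\<Sum>i<length ws. ws!i $ a * ws!i $ b))"

lemma PU_carrier: "PU n ws \<in> carrier_mat n n" unfolding PU_def by simp

lemma PU_dims[simp]: "dim_row (PU n ws) = n" "dim_col (PU n ws) = n" unfolding PU_def by auto

lemma delta_sum: "a < (n::nat) \<Longrightarrow> (\<Sum>b<n. (if a = b then 1 else 0) * (f b::real)) = f a"
  by (subst sum.cong[OF refl, of _ _ "\<lambda>b. if a = b then f b else 0"]) (auto simp: sum.delta')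

lemma PU_sym: "(PU n ws)\<^sup>T = PU n ws"
  unfolding PU_def by (rule eq_matI) (auto simp: mult.commute)

context
  fixes n :: nat and ws :: "real vec list"
  assumes wsc: "set ws \<subseteq> carrier_vec n"
    and on: "\<forall>i<length ws. \<forall>j<length ws. ws!i \<bullet> ws!j = (if i = j then 1 else 0)"
begin

lemma ws_dim: "i < length ws \<Longrightarrow> dim_vec (ws!i) = n"
  using wsc nth_mem by force

lemma PU_apply:
  assumes x: "x \<in> carrier_vec n" and a: "a < n"
  shows "(PU n ws *\<^sub>v x) $ a = x $ a - (\<Sum>i<length ws. (ws!i \<bullet> x) * ws!i $ a)"
proof -
  have "(PU n ws *\<^sub>v x) $ a = (\<Sum>b<n. ((if a = b then 1 else 0) - (\<Sum>i<length ws. ws!i $ a * ws!i $ b)) * x $ b)"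
    using x a by (simp add: PU_def scalar_prod_def atLeast0LessThan)
  also have "\<dots> = (\<Sum>b<n. (if a = b then x $ b else 0)) - (\<Sum>b<n. \<Sum>i<length ws. ws!i $ a * ws!i $ b * x $ b)"
    by (simp add: left_diff_distrib sum_subtractf sum_distrib_right delta_sum[OF a] a)
  also have "(\<Sum>b<n. (if a = b then x $ b else 0)) = x $ a" using a by simp
  also have "(\<Sum>b<n. \<Sum>i<length ws. ws!i $ a * ws!i $ b * x $ b) = (\<Sum>i<length ws. \<Sum>b<n. ws!i $ a * (ws!i $ b * x $ b))"
    by (subst sum.swap) (simp add: mult.assoc)
  also have "\<dots> = (\<Sum>i<length ws. (ws!i \<bullet> x) * ws!i $ a)"
    using x by (simp add: scalar_prod_def atLeast0LessThan sum_distrib_left mult.commute)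
  finally show ?thesis .
qed

lemma PU_vec: "x \<in> carrier_vec n \<Longrightarrow> PU n ws *\<^sub>v x \<in> carrier_vec n"
  using PU_carrier by (metis mult_mat_vec_carrier)

lemma PU_orth:
  assumes x: "x \<in> carrier_vec n" and j: "j < length ws"
  shows "ws!j \<bullet> (PU n ws *\<^sub>v x) = 0"
proof -
  let ?c = "\<lambda>i. ws!i \<bullet> x"
  have "ws!j \<bullet> (PU n ws *\<^sub>v x) = (\<Sum>a<n. ws!j $ a * (PU n ws *\<^sub>v x) $ a)"
    unfolding scalar_prod_def by (simp add: atLeast0LessThan)
  also have "\<dots> = (\<Sum>a<n. ws!j $ a * (x $ a - (\<Sum>i<length ws. ?c i * ws!i $ a)))"
    by (intro sum.cong refl) (simp add: PU_apply[OF x] del: index_mult_mat_vec)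
  also have "\<dots> = (\<Sum>a<n. ws!j $ a * x $ a) - (\<Sum>a<n. \<Sum>i<length ws. ?c i * (ws!j $ a * ws!i $ a))"
    by (simp add: right_diff_distrib sum_subtractf sum_distrib_left mult_ac)
  also have "(\<Sum>a<n. \<Sum>i<length ws. ?c i * (ws!j $ a * ws!i $ a)) = (\<Sum>i<length ws. \<Sum>a<n. ?c i * (ws!j $ a * ws!i $ a))"
    by (rule sum.swap)
  also have "\<dots> = (\<Sum>i<length ws. ?c i * (ws!j \<bullet> ws!i))"
    by (intro sum.cong refl) (simp add: sum_distrib_left scalar_prod_def atLeast0LessThan ws_dim)
  also have "\<dots> = (\<Sum>i<length ws. if i = j then ?c i else 0)"
    by (intro sum.cong refl) (use on j in auto)
  also have "\<dots> = ?c j" using j by (simp add: sum.delta)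
  also have "(\<Sum>a<n. ws!j $ a * x $ a) = ?c j"
    using x by (simp add: scalar_prod_def atLeast0LessThan)
  finally show ?thesis by simp
qed

lemma PU_id:
  assumes x: "x \<in> carrier_vec n" and o: "\<forall>j<length ws. ws!j \<bullet> x = 0"
  shows "PU n ws *\<^sub>v x = x"
proof (rule eq_vecI)
  fix i assume "i < dim_vec x"
  then have i: "i < n" using x by simp
  show "(PU n ws *\<^sub>v x) $ i = x $ i"
    by (subst PU_apply[OF x i]) (simp add: o)
qed (use x in simp)

end

lemma vec_pos:
  fixes v :: "real vec"
  assumes v: "v \<in> carrier_vec n" and nz: "v \<noteq> 0\<^sub>v n"
  shows "0 < v \<bullet> v"
proof -
  obtain i where i: "i < n" "v $ i \<noteq> 0" using v nz by (metis carrier_vecD eq_vecI index_zero_vec(1) index_zero_vec(2))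
  have e: "v \<bullet> v = (\<Sum>a<n. (v $ a)\<^sup>2)" using v by (simp add: scalar_prod_def atLeast0LessThan power2_eq_square)
  have "(v $ i)\<^sup>2 \<le> (\<Sum>a<n. (v $ a)\<^sup>2)" by (rule member_le_sum) (use i in auto)
  moreover have "0 < (v $ i)\<^sup>2" using i by simp
  ultimately show ?thesis using e by linarith
qed

lemma orth_M:
  fixes M :: "real mat"
  assumes M: "M \<in> carrier_mat n n" and sym: "M\<^sup>T = M"
    and w: "w \<in> carrier_vec n" and ew: "M *\<^sub>v w = l \<cdot>\<^sub>v w"
    and x: "x \<in> carrier_vec n" and o: "w \<bullet> x = 0"
  shows "w \<bullet> (M *\<^sub>v x) = 0"
proof -
  have "w \<bullet> (M *\<^sub>v x) = (M\<^sup>T *\<^sub>v w) \<bullet> x" using transpose_vec_mult_scalar[OF M x w] by simp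
  also have "\<dots> = (l \<cdot>\<^sub>v w) \<bullet> x" using sym ew by simp
  also have "\<dots> = l * (w \<bullet> x)" using w x by simp
  finally show ?thesis using o by simp
qed

lemma step_ev:
  fixes M :: "real mat"
  assumes M: "M \<in> carrier_mat n n" and sym: "M\<^sup>T = M"
    and wsc: "set ws \<subseteq> carrier_vec n"
    and on: "\<forall>i<length ws. \<forall>j<length ws. ws!i \<bullet> ws!j = (if i = j then 1 else 0)"
    and eig: "\<forall>i<length ws. \<exists>l. M *\<^sub>v ws!i = l \<cdot>\<^sub>v ws!i"
    and k: "length ws < n"
  shows "\<exists>u \<mu>. u \<in> carrier_vec n \<and> u \<bullet> u = 1 \<and> (\<forall>j<length ws. ws!j \<bullet> u = 0) \<and> M *\<^sub>v u = \<mu> \<cdot>\<^sub>v u"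
proof -
  define P where "P = PU n ws"
  have P: "P \<in> carrier_mat n n" unfolding P_def by (rule PU_carrier)
  have Psym: "P\<^sup>T = P" unfolding P_def by (rule PU_sym)
  define N where "N = P * M * P"
  have N: "N \<in> carrier_mat n n" unfolding N_def using P M by simp
  have Nsym: "N\<^sup>T = N"
  proof -
    have "N\<^sup>T = P\<^sup>T * (P * M)\<^sup>T" unfolding N_def by (rule transpose_mult) (use P M in auto)
    also have "(P * M)\<^sup>T = M\<^sup>T * P\<^sup>T" by (rule transpose_mult) (use P M in auto)
    finally show ?thesis unfolding N_def Psym sym using P M by (simp add: assoc_mult_mat[of _ n n _ n _ n])
  qed
  have Nv: "\<And>x. x \<in> carrier_vec n \<Longrightarrow> N *\<^sub>v x = P *\<^sub>v (M *\<^sub>v (P *\<^sub>v x))"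
    unfolding N_def using P M by (simp add: assoc_mult_mat_vec[of _ n n _ n])
  have wsn: "\<And>j. j < length ws \<Longrightarrow> ws!j \<in> carrier_vec n" using wsc nth_mem by blast
  have orthM: "\<And>x. x \<in> carrier_vec n \<Longrightarrow> (\<forall>j<length ws. ws!j \<bullet> x = 0) \<Longrightarrow> (\<forall>j<length ws. ws!j \<bullet> (M *\<^sub>v x) = 0)"
  proof (intro allI impI)
    fix x j assume x: "x \<in> carrier_vec n" and o: "\<forall>j<length ws. ws!j \<bullet> x = 0" and j: "j < length ws"
    obtain l where "M *\<^sub>v ws!j = l \<cdot>\<^sub>v ws!j" using eig j by blast
    then show "ws!j \<bullet> (M *\<^sub>v x) = 0" using orth_M[OF M sym wsn[OF j] _ x] o j by blast
  qed
  have Pid: "\<And>x. x \<in> carrier_vec n \<Longrightarrow> (\<forall>j<length ws. ws!j \<bullet> x = 0) \<Longrightarrow> P *\<^sub>v x = x"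
    unfolding P_def using PU_id[OF wsc on] by blast
  have Porth: "\<And>x j. x \<in> carrier_vec n \<Longrightarrow> j < length ws \<Longrightarrow> ws!j \<bullet> (P *\<^sub>v x) = 0"
    unfolding P_def using PU_orth[OF wsc on] by blast
  have NM: "\<And>x. x \<in> carrier_vec n \<Longrightarrow> (\<forall>j<length ws. ws!j \<bullet> x = 0) \<Longrightarrow> N *\<^sub>v x = M *\<^sub>v x"
    using Nv Pid orthM M by simp
  obtain v \<mu> where v: "v \<in> carrier_vec n" "v \<noteq> 0\<^sub>v n" "\<forall>j<length ws. ws!j \<bullet> v = 0" "M *\<^sub>v v = \<mu> \<cdot>\<^sub>v v"
  proof (cases "\<exists>a<n. \<exists>b<n. N $$ (a,b) \<noteq> 0")
    case True
    then obtain a b where ab: "a < n" "b < n" "N $$ (a,b) \<noteq> 0" by blast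
    obtain \<mu> v where mv: "\<mu> \<noteq> 0" "v \<in> carrier_vec n" "v \<noteq> 0\<^sub>v n" "N *\<^sub>v v = \<mu> \<cdot>\<^sub>v v"
      using sym_nonzero_ev[OF N Nsym ab] by blast
    have o: "\<forall>j<length ws. ws!j \<bullet> v = 0"
    proof (intro allI impI)
      fix j assume j: "j < length ws"
      have "\<mu> * (ws!j \<bullet> v) = ws!j \<bullet> (\<mu> \<cdot>\<^sub>v v)" using mv(2) wsn[OF j] by simp
      also have "\<dots> = ws!j \<bullet> (N *\<^sub>v v)" using mv(4) by simp
      also have "\<dots> = 0" using Nv[OF mv(2)] Porth[OF _ j] M mv(2) P by simp
      finally show "ws!j \<bullet> v = 0" using mv(1) by simp
    qed
    show ?thesis using that[of v \<mu>] mv(2,3) o NM[OF mv(2) o] mv(4) by simp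
  next
    case False
    then have N0: "\<And>x. x \<in> carrier_vec n \<Longrightarrow> N *\<^sub>v x = 0\<^sub>v n"
      using N by (intro eq_vecI) (auto simp: scalar_prod_def)
    have "\<exists>a<n. P *\<^sub>v unit_vec n a \<noteq> 0\<^sub>v n"
    proof (rule ccontr)
      assume "\<not> ?thesis"
      then have z: "\<And>a. a < n \<Longrightarrow> (P *\<^sub>v unit_vec n a) $ a = 0" by auto
      have "\<And>a. a < n \<Longrightarrow> 1 - (\<Sum>i<length ws. (ws!i $ a)\<^sup>2) = 0"
      proof -
        fix a assume a: "a < n"
        have "(P *\<^sub>v unit_vec n a) $ a = 1 - (\<Sum>i<length ws. (ws!i $ a)\<^sup>2)"
          unfolding P_def using PU_apply[OF wsc on _ a, of "unit_vec n a"] a wsn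
          by (simp add: scalar_prod_right_unit power2_eq_square)
        then show "1 - (\<Sum>i<length ws. (ws!i $ a)\<^sup>2) = 0" using z[OF a] by simp
      qed
      then have "(\<Sum>a<n. 1 - (\<Sum>i<length ws. (ws!i $ a)\<^sup>2)) = 0" by simp
      moreover have "(\<Sum>a<n. 1 - (\<Sum>i<length ws. (ws!i $ a)\<^sup>2)) = real n - real (length ws)"
      proof -
        have "(\<Sum>a<n. \<Sum>i<length ws. (ws!i $ a)\<^sup>2) = (\<Sum>i<length ws. \<Sum>a<n. (ws!i $ a)\<^sup>2)"
          by (rule sum.swap)
        also have "\<dots> = (\<Sum>i<length ws. ws!i \<bullet> ws!i)"
          proof (intro sum.cong refl)
          fix i assume "i \<in> {..<length ws}"
          then have "dim_vec (ws!i) = n" using wsn by auto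
          then show "(\<Sum>a<n. (ws!i $ a)\<^sup>2) = ws!i \<bullet> ws!i"
            by (simp add: scalar_prod_def atLeast0LessThan power2_eq_square)
        qed
        also have "\<dots> = real (length ws)" using on by simp
        finally show ?thesis by (simp add: sum_subtractf)
      qed
      ultimately show False using k by simp
    qed
    then obtain a where a: "a < n" "P *\<^sub>v unit_vec n a \<noteq> 0\<^sub>v n" by blast
    define u where "u = P *\<^sub>v unit_vec n a"
    have u: "u \<in> carrier_vec n" unfolding u_def using P by simp
    have o: "\<forall>j<length ws. ws!j \<bullet> u = 0" unfolding u_def using Porth by simp
    have m0: "M *\<^sub>v u = 0\<^sub>v n" using NM[OF u o] N0[OF u] by simp
    have "0 \<cdot>\<^sub>v u = 0\<^sub>v n" using u by (intro eq_vecI) auto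
    with m0 have "M *\<^sub>v u = 0 \<cdot>\<^sub>v u" by simp
    then show ?thesis using that[OF u a(2)[folded u_def] o] by blast
  qed
  have pos: "0 < v \<bullet> v" by (rule vec_pos[OF v(1,2)])
  define u where "u = (1 / sqrt (v \<bullet> v)) \<cdot>\<^sub>v v"
  have u: "u \<in> carrier_vec n" unfolding u_def using v by simp
  have uu: "u \<bullet> u = 1" unfolding u_def using v(1) pos
    by (simp add: smult_scalar_prod_distrib)
  have uo: "\<forall>j<length ws. ws!j \<bullet> u = 0" unfolding u_def using v(1,3) wsn by simp
  have um: "M *\<^sub>v u = \<mu> \<cdot>\<^sub>v u" unfolding u_def using v(1,4) M
    by (simp add: mult_mat_vec[OF M v(1)] smult_smult_assoc mult.commute)
  show ?thesis using u uu uo um by blast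
qed

lemma spectral_list:
  fixes M :: "real mat"
  assumes M: "M \<in> carrier_mat n n" and sym: "M\<^sup>T = M" and kn: "k \<le> n"
  shows "\<exists>ws ls. length ws = k \<and> length ls = k \<and> set ws \<subseteq> carrier_vec n
     \<and> (\<forall>i<k. \<forall>j<k. ws!i \<bullet> ws!j = (if i = j then 1 else 0))
     \<and> (\<forall>i<k. M *\<^sub>v ws!i = ls!i \<cdot>\<^sub>v ws!i)"
  using kn
proof (induct k)
  case 0
  show ?case by (intro exI[of _ "[]"]) auto
next
  case (Suc k)
  then obtain ws ls where ws: "length ws = k" "length ls = k" "set ws \<subseteq> carrier_vec n"
     "\<forall>i<k. \<forall>j<k. ws!i \<bullet> ws!j = (if i = j then 1 else 0)"
     "\<forall>i<k. M *\<^sub>v ws!i = ls!i \<cdot>\<^sub>v ws!i" by auto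
  obtain u \<mu> where u: "u \<in> carrier_vec n" "u \<bullet> u = 1" "\<forall>j<length ws. ws!j \<bullet> u = 0" "M *\<^sub>v u = \<mu> \<cdot>\<^sub>v u"
    using step_ev[OF M sym ws(3)] ws Suc(2) by auto
  have wsn: "\<And>j. j < k \<Longrightarrow> ws!j \<in> carrier_vec n" using ws(1,3) nth_mem by blast
  have uo: "\<And>j. j < k \<Longrightarrow> u \<bullet> ws!j = 0" using u(3) ws(1) wsn u(1) comm_scalar_prod by metis
  show ?case
  proof (intro exI[of _ "ws @ [u]"] exI[of _ "ls @ [\<mu>]"] conjI allI impI)
    show "length (ws @ [u]) = Suc k" "length (ls @ [\<mu>]) = Suc k" using ws by auto
    show "set (ws @ [u]) \<subseteq> carrier_vec n" using ws u by auto
    fix i assume i: "i < Suc k"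
    show "M *\<^sub>v (ws @ [u]) ! i = (ls @ [\<mu>]) ! i \<cdot>\<^sub>v (ws @ [u]) ! i"
      using i ws u by (cases "i < k") (auto simp: nth_append less_Suc_eq)
    fix j assume j: "j < Suc k"
    show "(ws @ [u]) ! i \<bullet> (ws @ [u]) ! j = (if i = j then 1 else 0)"
      using i j ws u uo by (cases "i < k"; cases "j < k") (auto simp: nth_append less_Suc_eq)
  qed
qed

lemma proots_lin: "proots (\<Prod>l\<leftarrow>ls. [:-l,1:]) = mset (ls :: real list)"
proof (induct ls)
  case Nil then show ?case by simp
next
  case (Cons a ls)
  have "proots (\<Prod>l\<leftarrow>a#ls. [:-l,1:]) = proots ([:-a,1:] * (\<Prod>l\<leftarrow>ls. [:-l,1:]))" by simp
  also have "\<dots> = proots [:-a,1:] + proots (\<Prod>l\<leftarrow>ls. [:-l,1:])"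
    by (rule proots_mult) (auto simp: prod_list_zero_iff)
  finally show ?case using Cons by simp
qed

lemma spectral:
  fixes M :: "real mat"
  assumes M: "M \<in> carrier_mat n n" and sym: "M\<^sup>T = M"
  shows "\<exists>ws ls. length ws = n \<and> length ls = n \<and> set ws \<subseteq> carrier_vec n
     \<and> (\<forall>i<n. \<forall>j<n. ws!i \<bullet> ws!j = (if i = j then 1 else 0))
     \<and> (\<forall>i<n. M *\<^sub>v ws!i = ls!i \<cdot>\<^sub>v ws!i)
     \<and> proots (char_poly M) = mset ls
     \<and> (\<forall>a<n. \<forall>b<n. (\<Sum>i<n. ws!i $ a * ws!i $ b) = (if a = b then 1 else 0))"
proof -
  obtain ws ls where ws: "length ws = n" "length ls = n" "set ws \<subseteq> carrier_vec n"
     "\<forall>i<n. \<forall>j<n. ws!i \<bullet> ws!j = (if i = j then 1 else 0)"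
     "\<forall>i<n. M *\<^sub>v ws!i = ls!i \<cdot>\<^sub>v ws!i" using spectral_list[OF M sym order_refl] by blast
  have wsn: "\<And>j. j < n \<Longrightarrow> ws!j \<in> carrier_vec n" using ws(1,3) nth_mem by blast
  define W where "W = mat n n (\<lambda>(a,j). ws!j $ a)"
  define L where "L = mat n n (\<lambda>(i,j). if i = j then ls!i else (0::real))"
  have W: "W \<in> carrier_mat n n" and WT: "W\<^sup>T \<in> carrier_mat n n" and L: "L \<in> carrier_mat n n"
    unfolding W_def L_def by auto
  have WTW: "W\<^sup>T * W = 1\<^sub>m n"
  proof (rule eq_matI)
    fix i j assume i: "i < dim_row (1\<^sub>m n)" and j: "j < dim_col (1\<^sub>m n)"
    then have i: "i < n" and j: "j < n" by auto
    have "(W\<^sup>T * W) $$ (i,j) = (\<Sum>a<n. ws!i $ a * ws!j $ a)"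
      using i j unfolding W_def by (simp add: scalar_prod_def atLeast0LessThan)
    also have "\<dots> = ws!i \<bullet> ws!j" using wsn[OF j] by (simp add: scalar_prod_def atLeast0LessThan)
    also have "\<dots> = 1\<^sub>m n $$ (i,j)" using ws(4) i j by simp
    finally show "(W\<^sup>T * W) $$ (i,j) = 1\<^sub>m n $$ (i,j)" .
  qed (auto simp: W_def)
  have WWT: "W * W\<^sup>T = 1\<^sub>m n" by (rule mat_mult_left_right_inverse[OF WT W WTW])
  have MW: "M * W = W * L"
  proof (rule eq_matI)
    fix a j assume a: "a < dim_row (W * L)" and j: "j < dim_col (W * L)"
    then have a: "a < n" and j: "j < n" using W L by auto
    have "(M * W) $$ (a,j) = (M *\<^sub>v ws!j) $ a"
    proof -
      have "col W j = ws!j" using j wsn[OF j] unfolding W_def by (intro eq_vecI) auto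
      then show ?thesis using a j M W wsn[OF j] by simp
    qed
    also have "\<dots> = ls!j * ws!j $ a" using ws(5) j a wsn[OF j] by simp
    also have "\<dots> = (W * L) $$ (a,j)"
    proof -
      have "(W * L) $$ (a,j) = (\<Sum>b<n. ws!b $ a * (if b = j then ls!b else 0))"
        using a j unfolding W_def L_def by (simp add: scalar_prod_def atLeast0LessThan)
      also have "\<dots> = (\<Sum>b<n. if b = j then ws!j $ a * ls!j else 0)"
        by (intro sum.cong refl) auto
      also have "\<dots> = ls!j * ws!j $ a" using j by simp
      finally show ?thesis by simp
    qed
    finally show "(M * W) $$ (a,j) = (W * L) $$ (a,j)" .
  qed (use M W L in auto)
  have "M = W * L * W\<^sup>T"
  proof -
    have "M = M * (W * W\<^sup>T)" using WWT M by simp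
    also have "\<dots> = M * W * W\<^sup>T" using M W WT by (simp add: assoc_mult_mat[of _ n n _ n _ n])
    finally show ?thesis using MW by simp
  qed
  then have "similar_mat_wit M L W (W\<^sup>T)"
    unfolding similar_mat_wit_def Let_def using M W WT L WWT WTW by auto
  then have sim: "similar_mat M L" unfolding similar_mat_def by blast
  have ut: "upper_triangular L" unfolding L_def upper_triangular_def by auto
  have dL: "diag_mat L = ls" unfolding diag_mat_def L_def using ws(2)
    by (intro nth_equalityI) auto
  have "char_poly M = (\<Prod>l\<leftarrow>ls. [:-l,1:])"
    using char_poly_similar[OF sim] char_poly_upper_triangular[OF L ut] dL by simp
  then have "proots (char_poly M) = mset ls" by (simp add: proots_lin)
  moreover have "\<forall>a<n. \<forall>b<n. (\<Sum>i<n. ws!i $ a * ws!i $ b) = (if a = b then 1 else 0)"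
  proof (intro allI impI)
    fix a b assume a: "a < n" and b: "b < n"
    have "(W * W\<^sup>T) $$ (a,b) = (\<Sum>i<n. ws!i $ a * ws!i $ b)"
      using a b unfolding W_def by (simp add: scalar_prod_def atLeast0LessThan)
    then show "(\<Sum>i<n. ws!i $ a * ws!i $ b) = (if a = b then 1 else 0)" using WWT a b by simp
  qed
  ultimately show ?thesis using ws by blast
qed

lemma tangent_powr:
  fixes x p :: real
  assumes x: "0 \<le> x" and p: "1 \<le> p"
  shows "1 + p * (x - 1) \<le> x powr p"
proof (cases "x = 0")
  case True then show ?thesis using p by simp
next
  case False
  with x have x0: "0 < x" by simp
  define f where "f = (\<lambda>t::real. t powr p - 1 - p * (t - 1))"
  have df: "\<And>t. 0 < t \<Longrightarrow> DERIV f t :> p * t powr (p - 1) - p"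
    unfolding f_def by (auto intro!: derivative_eq_intros has_real_derivative_powr)
  have f1: "f 1 = 0" unfolding f_def by simp
  have "0 \<le> f x"
  proof (cases "x \<le> 1")
    case True
    have "f x \<ge> f 1"
    proof (rule DERIV_nonpos_imp_nonincreasing[of x 1 f, OF True])
      fix t assume t: "x \<le> t" "t \<le> 1"
      then have t0: "0 < t" using x0 by simp
      have "t powr (p - 1) \<le> 1" using powr_mono2[of "p-1" t 1] t t0 p by simp
      then show "\<exists>y. DERIV f t :> y \<and> y \<le> 0" using df[OF t0] p
        by (intro exI[of _ "p * t powr (p - 1) - p"]) (simp add: mult_left_le)
    qed
    then show ?thesis using f1 by simp
  next
    case False
    have "f 1 \<le> f x"
    proof (rule DERIV_nonneg_imp_nondecreasing[of 1 x f])
      show "1 \<le> x" using False by simp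
      fix t assume t: "1 \<le> t" "t \<le> x"
      then have t0: "0 < t" by simp
      have "1 \<le> t powr (p - 1)" using t p by (simp add: ge_one_powr_ge_zero)
      then show "\<exists>y. DERIV f t :> y \<and> y \<ge> 0" using df[OF t0] p
        by (intro exI[of _ "p * t powr (p - 1) - p"]) (simp add: mult_le_cancel_left1)
    qed
    then show ?thesis using f1 by simp
  qed
  then show ?thesis unfolding f_def by simp
qed

lemma cs_aux:
  fixes f g :: "nat \<Rightarrow> real"
  assumes f1: "(\<Sum>i<n. (f i)\<^sup>2) = 1"
  shows "(\<Sum>i<n. f i * g i) \<le> sqrt (\<Sum>i<n. (g i)\<^sup>2)"
proof (cases "(\<Sum>i<n. (g i)\<^sup>2) = 0")
  case True
  then have "\<forall>i\<in>{..<n}. (g i)\<^sup>2 = 0" by (subst (asm) sum_nonneg_eq_0_iff) auto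
  then show ?thesis by simp
next
  case False
  define s where "s = sqrt (\<Sum>i<n. (g i)\<^sup>2)"
  have gs: "(\<Sum>i<n. (g i)\<^sup>2) \<ge> 0" by (simp add: sum_nonneg)
  with False have s0: "s > 0" unfolding s_def by simp
  have s2: "s\<^sup>2 = (\<Sum>i<n. (g i)\<^sup>2)" unfolding s_def using gs by simp
  have "\<And>i. 2 * (f i * (g i / s)) \<le> (f i)\<^sup>2 + (g i / s)\<^sup>2"
  proof -
    fix i have "0 \<le> (f i - g i / s)\<^sup>2" by simp
    then show "2 * (f i * (g i / s)) \<le> (f i)\<^sup>2 + (g i / s)\<^sup>2" by (simp add: power2_diff)
  qed
  then have "(\<Sum>i<n. 2 * (f i * (g i / s))) \<le> (\<Sum>i<n. (f i)\<^sup>2 + (g i / s)\<^sup>2)"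
    by (rule sum_mono)
  also have "\<dots> = 1 + (\<Sum>i<n. (g i)\<^sup>2) / s\<^sup>2"
    using f1 by (simp add: sum.distrib power_divide sum_divide_distrib)
  also have "\<dots> = 2" using s2 s0 False by simp
  finally have "(\<Sum>i<n. f i * g i) / s \<le> 1"
    by (simp add: sum_distrib_left[symmetric] sum_divide_distrib[symmetric] times_divide_eq_right)
  then show ?thesis using s0 unfolding s_def[symmetric] by (simp add: divide_le_eq)
qed

definition sh :: "nat \<Rightarrow> nat \<Rightarrow> nat \<Rightarrow> nat" where
  "sh n k x = (if x < n then (x + k) mod n else x)"

lemma sh_lt: "x < n \<Longrightarrow> sh n k x < n"
  unfolding sh_def by simp

lemma sh_inv: assumes k: "k \<le> n" and x: "x < n" shows "sh n (n - k) (sh n k x) = x"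
proof -
  have "sh n k x = (x + k) mod n" using x unfolding sh_def by simp
  moreover have "(x + k) mod n < n" using x by simp
  ultimately have "sh n (n - k) (sh n k x) = ((x + k) mod n + (n - k)) mod n"
    unfolding sh_def by simp
  also have "\<dots> = (x + k + (n - k)) mod n" by (simp add: mod_add_left_eq)
  also have "x + k + (n - k) = x + n" using k by simp
  finally show ?thesis using x by simp
qed

lemma sh_permutes: assumes k: "k \<le> (n::nat)" shows "sh n k permutes {..<n}"
proof (rule bij_imp_permutes)
  have inj: "inj_on (sh n k) {..<n}"
    by (rule inj_on_inverseI[of _ "sh n (n - k)"]) (use sh_inv[OF k] in auto)
  have "sh n k ` {..<n} \<subseteq> {..<n}" using sh_lt by auto
  then have "sh n k ` {..<n} = {..<n}" using endo_inj_surj[OF _ _ inj] by auto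
  then show "bij_betw (sh n k) {..<n} {..<n}" using inj unfolding bij_betw_def by auto
  show "\<And>x. x \<notin> {..<n} \<Longrightarrow> sh n k x = x" unfolding sh_def by auto
qed

lemma sum_shift:
  assumes m: "m < (n::nat)"
  shows "(\<Sum>k<n. f ((m + k) mod n)) = (\<Sum>j<n. (f j :: real))"
proof -
  have b: "bij_betw (sh n m) {..<n} {..<n}" using permutes_imp_bij[OF sh_permutes] m by auto
  have "(\<Sum>k<n. f ((m + k) mod n)) = (\<Sum>k<n. f (sh n m k))"
    by (intro sum.cong refl) (auto simp: sh_def add.commute)
  also have "\<dots> = (\<Sum>j<n. f j)" by (rule sum.reindex_bij_betw[OF b])
  finally show ?thesis .
qed

definition pval :: "real mat \<Rightarrow> nat \<Rightarrow> (nat \<Rightarrow> nat) \<Rightarrow> real" where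
  "pval D n \<sigma> = (\<Sum>i<n. D $$ (i, \<sigma> i))"

lemma perm_avg:
  assumes D: "D \<in> doubly_stochastic n" and n1: "1 \<le> n"
  shows "(\<Sum>\<sigma>\<in>{\<sigma>. \<sigma> permutes {..<n}}. pval D n \<sigma>) = real (card {\<sigma>. \<sigma> permutes {..<n}})"
proof -
  let ?S = "{\<sigma>. \<sigma> permutes {..<n}}"
  have rows: "\<And>i. i < n \<Longrightarrow> (\<Sum>j<n. D $$ (i,j)) = 1" using D unfolding doubly_stochastic_def by auto
  have shf: "\<And>k. k < n \<Longrightarrow> (\<Sum>\<sigma>\<in>?S. pval D n (sh n k \<circ> \<sigma>)) = (\<Sum>\<sigma>\<in>?S. pval D n \<sigma>)"
    by (rule setum_permutations_compose_left[OF sh_permutes, symmetric]) simp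
  have "(\<Sum>k<n. \<Sum>\<sigma>\<in>?S. pval D n (sh n k \<circ> \<sigma>)) = (\<Sum>k<n. \<Sum>\<sigma>\<in>?S. pval D n \<sigma>)"
    by (rule sum.cong[OF refl]) (simp add: shf)
  then have "real n * (\<Sum>\<sigma>\<in>?S. pval D n \<sigma>) = (\<Sum>k<n. \<Sum>\<sigma>\<in>?S. pval D n (sh n k \<circ> \<sigma>))"
    by simp
  also have "\<dots> = (\<Sum>\<sigma>\<in>?S. \<Sum>i<n. \<Sum>k<n. D $$ (i, sh n k (\<sigma> i)))"
    unfolding pval_def o_def by (subst sum.swap) (subst sum.swap, simp)
  also have "\<dots> = (\<Sum>\<sigma>\<in>?S. \<Sum>i<n. (1::real))"
  proof (intro sum.cong refl)
    fix \<sigma> i assume s: "\<sigma> \<in> ?S" and i: "i \<in> {..<n}"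
    have si: "\<sigma> i < n" using s i permutes_in_image by fastforce
    have "(\<Sum>k<n. D $$ (i, sh n k (\<sigma> i))) = (\<Sum>k<n. D $$ (i, (\<sigma> i + k) mod n))"
      using si by (simp add: sh_def)
    also have "\<dots> = (\<Sum>j<n. D $$ (i, j))" by (rule sum_shift[OF si])
    also have "\<dots> = 1" using rows i by simp
    finally show "(\<Sum>k<n. D $$ (i, sh n k (\<sigma> i))) = 1" .
  qed
  also have "\<dots> = real n * real (card ?S)" by simp
  finally have eq: "real n * (\<Sum>\<sigma>\<in>?S. pval D n \<sigma>) = real n * real (card ?S)" .
  show ?thesis using eq n1 by simp
qed

lemma perm_two:
  assumes i: "i < n" and j: "j < (n::nat)" and a: "a < n" and b: "b < n" and ij: "i \<noteq> j" and ab: "a \<noteq> b"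
  shows "\<exists>\<sigma>. \<sigma> permutes {..<n} \<and> \<sigma> i = a \<and> \<sigma> j = b"
proof -
  define j' where "j' = transpose i a j"
  have j'n: "j' < n" unfolding j'_def transpose_def using i j a by auto
  have j'a: "j' \<noteq> a" unfolding j'_def transpose_def using ij by auto
  define \<sigma> where "\<sigma> = transpose j' b \<circ> transpose i a"
  have "\<sigma> permutes {..<n}" unfolding \<sigma>_def
    by (intro permutes_compose permutes_swap_id) (use i a j'n b in auto)
  moreover have "\<sigma> i = a" unfolding \<sigma>_def using j'a ab by (simp add: transpose_def)
  moreover have "\<sigma> j = b" unfolding \<sigma>_def by (simp add: j'_def)
  ultimately show ?thesis by blast
qed

lemma pval_swap:
  assumes i: "i < n" and j: "j < n" and ij: "i \<noteq> j"
  shows "pval D n \<sigma> - pval D n (\<sigma> \<circ> transpose i j)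
    = D $$ (i, \<sigma> i) + D $$ (j, \<sigma> j) - D $$ (i, \<sigma> j) - D $$ (j, \<sigma> i)"
proof -
  have "pval D n \<sigma> - pval D n (\<sigma> \<circ> transpose i j)
      = (\<Sum>l<n. D $$ (l, \<sigma> l) - D $$ (l, \<sigma> (transpose i j l)))"
    unfolding pval_def by (simp add: sum_subtractf)
  also have "\<dots> = (\<Sum>l<n. (if l = i then D $$ (i, \<sigma> i) - D $$ (i, \<sigma> j) else 0)
       + (if l = j then D $$ (j, \<sigma> j) - D $$ (j, \<sigma> i) else 0))"
    by (intro sum.cong refl) (use ij in \<open>auto simp: transpose_def\<close>)
  also have "\<dots> = D $$ (i, \<sigma> i) + D $$ (j, \<sigma> j) - D $$ (i, \<sigma> j) - D $$ (j, \<sigma> i)"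
    using i j by (simp add: sum.distrib)
  finally show ?thesis .
qed

lemma all_one_J:
  assumes D: "D \<in> doubly_stochastic n" and n1: "1 \<le> n"
    and all: "\<forall>\<sigma>. \<sigma> permutes {..<n} \<longrightarrow> pval D n \<sigma> = 1"
  shows "D = J_mat n"
proof -
  have Dc: "D \<in> carrier_mat n n" and rows: "\<And>i. i < n \<Longrightarrow> (\<Sum>j<n. D $$ (i,j)) = 1"
    and cols: "\<And>j. j < n \<Longrightarrow> (\<Sum>i<n. D $$ (i,j)) = 1"
    using D unfolding doubly_stochastic_def by auto
  have quad: "\<And>i j a b. i < n \<Longrightarrow> j < n \<Longrightarrow> a < n \<Longrightarrow> b < n \<Longrightarrow>
      D $$ (i,a) + D $$ (j,b) = D $$ (i,b) + D $$ (j,a)"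
  proof -
    fix i j a b assume i: "i < n" and j: "j < n" and a: "a < n" and b: "b < n"
    show "D $$ (i,a) + D $$ (j,b) = D $$ (i,b) + D $$ (j,a)"
    proof (cases "i = j \<or> a = b")
      case True then show ?thesis by auto
    next
      case False
      then obtain \<sigma> where s: "\<sigma> permutes {..<n}" "\<sigma> i = a" "\<sigma> j = b"
        using perm_two[OF i j a b] by blast
      have s2: "\<sigma> \<circ> transpose i j permutes {..<n}"
        by (intro permutes_compose permutes_swap_id s) (use i j in auto)
      have "pval D n \<sigma> - pval D n (\<sigma> \<circ> transpose i j) = 0" using all s(1) s2 by simp
      then show ?thesis using pval_swap[OF i j, of D \<sigma>] False s by simp
    qed
  qed
  have same: "\<And>i a b. i < n \<Longrightarrow> a < n \<Longrightarrow> b < n \<Longrightarrow> D $$ (i,a) = D $$ (i,b)"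
  proof -
    fix i a b assume i: "i < n" and a: "a < n" and b: "b < n"
    have "(\<Sum>j<n. D $$ (i,a) + D $$ (j,b)) = (\<Sum>j<n. D $$ (i,b) + D $$ (j,a))"
      by (intro sum.cong refl) (use quad i a b in auto)
    then have "real n * D $$ (i,a) + 1 = real n * D $$ (i,b) + 1"
      using cols a b by (simp add: sum.distrib)
    then show "D $$ (i,a) = D $$ (i,b)" using n1 by simp
  qed
  show ?thesis
  proof (rule eq_matI)
    fix i a assume "i < dim_row (J_mat n)" "a < dim_col (J_mat n)"
    then have i: "i < n" and a: "a < n" by (auto simp: J_mat_def)
    have "1 = (\<Sum>b<n. D $$ (i,b))" using rows i by simp
    also have "\<dots> = (\<Sum>b<n. D $$ (i,a))"
    proof (intro sum.cong refl)
      fix b assume "b \<in> {..<n}"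
      then show "D $$ (i,b) = D $$ (i,a)" using same[OF i _ a, of b] by simp
    qed
    also have "\<dots> = real n * D $$ (i,a)" by simp
    finally have "D $$ (i,a) = 1 / real n" using n1 by (simp add: field_simps)
    then show "D $$ (i,a) = J_mat n $$ (i,a)" using i a by (simp add: J_mat_def)
  qed (use Dc in \<open>simp_all add: J_mat_def\<close>)
qed

lemma exists_perm:
  assumes D: "D \<in> doubly_stochastic n" and n1: "1 \<le> n"
  shows "\<exists>\<sigma>. \<sigma> permutes {..<n} \<and> pval D n \<sigma> \<le> 1 \<and> (D \<noteq> J_mat n \<longrightarrow> pval D n \<sigma> < 1)"
proof (cases "\<exists>\<sigma>. \<sigma> permutes {..<n} \<and> pval D n \<sigma> < 1")
  case True
  then obtain \<sigma> where "\<sigma> permutes {..<n}" "pval D n \<sigma> < 1" by blast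
  then show ?thesis by (intro exI[of _ \<sigma>]) simp
next
  case False
  let ?S = "{\<sigma>. \<sigma> permutes {..<n}}"
  have fin: "finite ?S" by (rule finite_permutations) simp
  have ge: "\<forall>\<sigma>\<in>?S. pval D n \<sigma> - 1 \<ge> 0"
  proof
    fix \<sigma> assume "\<sigma> \<in> ?S"
    then have "\<not> pval D n \<sigma> < 1" using False by blast
    then show "pval D n \<sigma> - 1 \<ge> 0" by simp
  qed
  have z: "(\<Sum>\<sigma>\<in>?S. pval D n \<sigma> - 1) = 0" using perm_avg[OF D n1] by (simp add: sum_subtractf)
  have iff: "(\<Sum>\<sigma>\<in>?S. pval D n \<sigma> - 1) = 0 \<longleftrightarrow> (\<forall>\<sigma>\<in>?S. pval D n \<sigma> - 1 = 0)"
    by (rule sum_nonneg_eq_0_iff[OF fin]) (use ge in blast)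
  have "\<forall>\<sigma>\<in>?S. pval D n \<sigma> - 1 = 0" using iff z by blast
  then have all: "\<forall>\<sigma>. \<sigma> permutes {..<n} \<longrightarrow> pval D n \<sigma> = 1" by auto
  have "D = J_mat n" by (rule all_one_J[OF D n1 all])
  moreover have "id permutes {..<n}" by (rule permutes_id)
  ultimately show ?thesis using all by (intro exI[of _ id]) simp
qed

lemma sv_struct:
  fixes A :: "real mat"
  assumes A: "A \<in> carrier_mat n n"
  shows "\<exists>ws ls. length ws = n \<and> length ls = n \<and> set ws \<subseteq> carrier_vec n
   \<and> (\<forall>i<n. \<forall>j<n. ws!i \<bullet> ws!j = (if i = j then 1 else 0))
   \<and> (\<forall>a<n. \<forall>b<n. (\<Sum>i<n. ws!i $ a * ws!i $ b) = (if a = b then 1 else 0))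
   \<and> (\<forall>i<n. ls!i = (A *\<^sub>v ws!i) \<bullet> (A *\<^sub>v ws!i))
   \<and> (\<forall>p. (\<Sum>s\<in>#singular_values A. s powr p) = (\<Sum>i<n. sqrt (ls!i) powr p))
   \<and> (A *\<^sub>v vec n (\<lambda>_. 1) = 0\<^sub>v n \<and> 1 \<le> n \<longrightarrow> (\<exists>k<n. ls!k = 0))"
proof -
  define M where "M = A\<^sup>T * A"
  have AT: "A\<^sup>T \<in> carrier_mat n n" using A by simp
  have M: "M \<in> carrier_mat n n" unfolding M_def using A by simp
  have Msym: "M\<^sup>T = M" unfolding M_def using transpose_mult[OF AT A] by simp
  obtain ws ls where ws: "length ws = n" "length ls = n" "set ws \<subseteq> carrier_vec n"
     "\<forall>i<n. \<forall>j<n. ws!i \<bullet> ws!j = (if i = j then 1 else 0)"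
     "\<forall>i<n. M *\<^sub>v ws!i = ls!i \<cdot>\<^sub>v ws!i"
     "proots (char_poly M) = mset ls"
     "\<forall>a<n. \<forall>b<n. (\<Sum>i<n. ws!i $ a * ws!i $ b) = (if a = b then 1 else 0)"
    using spectral[OF M Msym] by blast
  have wsn: "\<And>j. j < n \<Longrightarrow> ws!j \<in> carrier_vec n" using ws(1,3) nth_mem by blast
  have lsq: "\<forall>i<n. ls!i = (A *\<^sub>v ws!i) \<bullet> (A *\<^sub>v ws!i)"
  proof (intro allI impI)
    fix i assume i: "i < n"
    have w: "ws!i \<in> carrier_vec n" by (rule wsn[OF i])
    have "ls!i = ws!i \<bullet> (ls!i \<cdot>\<^sub>v ws!i)" using w ws(4) i by simp
    also have "\<dots> = ws!i \<bullet> (M *\<^sub>v ws!i)" using ws(5) i by simp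
    also have "M *\<^sub>v ws!i = A\<^sup>T *\<^sub>v (A *\<^sub>v ws!i)" unfolding M_def using A w
      by (simp add: assoc_mult_mat_vec[of _ n n _ n])
    also have "ws!i \<bullet> (A\<^sup>T *\<^sub>v (A *\<^sub>v ws!i)) = (A\<^sup>T *\<^sub>v (A *\<^sub>v ws!i)) \<bullet> ws!i"
      using A w by (intro comm_scalar_prod[of _ n]) auto
    also have "\<dots> = (A *\<^sub>v ws!i) \<bullet> (A *\<^sub>v ws!i)"
      by (rule transpose_vec_mult_scalar[OF A w]) (use A w in simp)
    finally show "ls!i = (A *\<^sub>v ws!i) \<bullet> (A *\<^sub>v ws!i)" .
  qed
  have sv: "singular_values A = image_mset sqrt (mset ls)"
    unfolding singular_values_def using ws(6) M_def by simp
  have sums: "\<forall>p. (\<Sum>s\<in>#singular_values A. s powr p) = (\<Sum>i<n. sqrt (ls!i) powr p)"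
  proof
    fix p :: real
    have "(\<Sum>s\<in>#singular_values A. s powr p) = sum_list (map (\<lambda>x. sqrt x powr p) ls)"
      unfolding sv by (simp add: sum_mset_sum_list[symmetric] mset_map image_mset.compositionality o_def)
    also have "\<dots> = (\<Sum>i<n. sqrt (ls!i) powr p)"
      using ws(2) by (simp add: sum_list_sum_nth atLeast0LessThan)
    finally show "(\<Sum>s\<in>#singular_values A. s powr p) = (\<Sum>i<n. sqrt (ls!i) powr p)" .
  qed
  have zero: "A *\<^sub>v vec n (\<lambda>_. 1) = 0\<^sub>v n \<and> 1 \<le> n \<longrightarrow> (\<exists>k<n. ls!k = 0)"
  proof
    assume h: "A *\<^sub>v vec n (\<lambda>_. 1) = 0\<^sub>v n \<and> 1 \<le> n"
    let ?u = "vec n (\<lambda>_. 1::real)"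
    have u: "?u \<in> carrier_vec n" by simp
    have u0: "?u \<noteq> 0\<^sub>v n"
    proof
      assume "?u = 0\<^sub>v n"
      then have "?u $ 0 = 0\<^sub>v n $ 0" by simp
      then show False using h by simp
    qed
    have "M *\<^sub>v ?u = A\<^sup>T *\<^sub>v (A *\<^sub>v ?u)" unfolding M_def using A u
      by (simp add: assoc_mult_mat_vec[of _ n n _ n])
    also have "\<dots> = A\<^sup>T *\<^sub>v 0\<^sub>v n" using h by simp
    also have "\<dots> = 0\<^sub>v n" using AT by (intro eq_vecI) (auto simp: scalar_prod_def)
    also have "\<dots> = 0 \<cdot>\<^sub>v ?u" by (intro eq_vecI) auto
    finally have "eigenvector M ?u 0" unfolding eigenvector_def using M u u0 by simp
    then have "eigenvalue M 0" unfolding eigenvalue_def by blast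
    then have r: "poly (char_poly M) 0 = 0" using eigenvalue_root_char_poly[OF M] by simp
    have "char_poly M \<noteq> 0" using degree_monic_char_poly[OF M] h by auto
    then have "0 \<in># proots (char_poly M)" using r by simp
    then have "0 \<in> set ls" using ws(6) by simp
    then show "\<exists>k<n. ls!k = 0" using ws(2) by (metis in_set_conv_nth)
  qed
  show ?thesis using ws lsq sums zero by blast
qed

lemma mv_idx:
  fixes A :: "real mat"
  assumes "A \<in> carrier_mat n n" "x \<in> carrier_vec n" "i < n"
  shows "(A *\<^sub>v x) $ i = (\<Sum>j<n. A $$ (i,j) * x $ j)"
  using assms by (simp add: scalar_prod_def atLeast0LessThan)

lemma dot_sq:
  fixes v :: "real vec"
  assumes "v \<in> carrier_vec n"
  shows "v \<bullet> v = (\<Sum>i<n. (v $ i)\<^sup>2)"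
  using assms by (simp add: scalar_prod_def atLeast0LessThan power2_eq_square)

lemma ds_facts:
  assumes "D \<in> doubly_stochastic n"
  shows "D \<in> carrier_mat n n" "\<And>i j. i < n \<Longrightarrow> j < n \<Longrightarrow> D $$ (i,j) \<ge> 0"
    "\<And>i. i < n \<Longrightarrow> (\<Sum>j<n. D $$ (i,j)) = 1" "\<And>j. j < n \<Longrightarrow> (\<Sum>i<n. D $$ (i,j)) = 1"
  using assms unfolding doubly_stochastic_def by auto

lemma jensen_row:
  fixes b x :: "nat \<Rightarrow> real"
  assumes nn: "\<And>j. j < n \<Longrightarrow> b j \<ge> 0" and s: "(\<Sum>j<n. b j) = 1"
  shows "(\<Sum>j<n. b j * x j)\<^sup>2 \<le> (\<Sum>j<n. b j * (x j)\<^sup>2)"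
proof -
  define t where "t = (\<Sum>j<n. b j * x j)"
  have "0 \<le> (\<Sum>j<n. b j * (x j - t)\<^sup>2)" by (intro sum_nonneg) (simp add: nn)
  also have "\<dots> = (\<Sum>j<n. b j * (x j)\<^sup>2) - 2 * t * (\<Sum>j<n. b j * x j) + t\<^sup>2 * (\<Sum>j<n. b j)"
    by (simp add: power2_diff algebra_simps sum.distrib sum_subtractf sum_distrib_left sum_distrib_right)
  also have "\<dots> = (\<Sum>j<n. b j * (x j)\<^sup>2) - t\<^sup>2" unfolding t_def[symmetric] s by (simp add: power2_eq_square)
  finally show ?thesis unfolding t_def by simp
qed

lemma ds_contract:
  assumes B: "B \<in> doubly_stochastic n" and x: "x \<in> carrier_vec n"
  shows "(\<Sum>i<n. ((B *\<^sub>v x) $ i)\<^sup>2) \<le> (\<Sum>j<n. (x $ j)\<^sup>2)"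
proof -
  note Bf = ds_facts[OF B]
  have "(\<Sum>i<n. ((B *\<^sub>v x) $ i)\<^sup>2) = (\<Sum>i<n. (\<Sum>j<n. B $$ (i,j) * x $ j)\<^sup>2)"
    by (intro sum.cong refl) (simp add: mv_idx[OF Bf(1) x])
  also have "\<dots> \<le> (\<Sum>i<n. \<Sum>j<n. B $$ (i,j) * (x $ j)\<^sup>2)"
    by (intro sum_mono jensen_row) (auto intro: Bf)
  also have "\<dots> = (\<Sum>j<n. (\<Sum>i<n. B $$ (i,j)) * (x $ j)\<^sup>2)"
    by (subst sum.swap) (simp add: sum_distrib_right)
  also have "\<dots> = (\<Sum>j<n. (x $ j)\<^sup>2)" by (intro sum.cong refl) (simp add: Bf(4))
  finally show ?thesis .
qed

lemma J_minus_contract: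
  assumes B: "B \<in> doubly_stochastic n" and n1: "1 \<le> n" and x: "x \<in> carrier_vec n"
  shows "(\<Sum>i<n. (((J_mat n - B) *\<^sub>v x) $ i)\<^sup>2) \<le> (\<Sum>j<n. (x $ j)\<^sup>2)"
proof -
  note Bf = ds_facts[OF B]
  define m where "m = (\<Sum>j<n. x $ j) / real n"
  define t where "t = (\<lambda>i. (B *\<^sub>v x) $ i)"
  have J: "J_mat n \<in> carrier_mat n n" by (simp add: J_mat_def)
  have e: "\<And>i. i < n \<Longrightarrow> ((J_mat n - B) *\<^sub>v x) $ i = m - t i"
  proof -
    fix i assume i: "i < n"
    have JB: "J_mat n - B \<in> carrier_mat n n" using J Bf(1) by (metis minus_carrier_mat)
    have "((J_mat n - B) *\<^sub>v x) $ i = (\<Sum>j<n. (J_mat n - B) $$ (i,j) * x $ j)"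
      by (rule mv_idx[OF JB x i])
    also have "\<dots> = (\<Sum>j<n. (1 / real n - B $$ (i,j)) * x $ j)"
      using i Bf(1) by (intro sum.cong refl) (simp add: J_mat_def)
    also have "\<dots> = m - t i" unfolding m_def t_def
      using mv_idx[OF Bf(1) x i] by (simp add: left_diff_distrib sum_subtractf sum_distrib_left sum_divide_distrib)
    finally show "((J_mat n - B) *\<^sub>v x) $ i = m - t i" .
  qed
  have st: "(\<Sum>i<n. t i) = real n * m"
  proof -
    have "(\<Sum>i<n. t i) = (\<Sum>i<n. \<Sum>j<n. B $$ (i,j) * x $ j)"
      unfolding t_def by (intro sum.cong refl) (simp add: mv_idx[OF Bf(1) x])
    also have "\<dots> = (\<Sum>j<n. (\<Sum>i<n. B $$ (i,j)) * x $ j)"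
      by (subst sum.swap) (simp add: sum_distrib_right)
    also have "\<dots> = (\<Sum>j<n. x $ j)" by (intro sum.cong refl) (simp add: Bf(4))
    finally show ?thesis unfolding m_def using n1 by simp
  qed
  have "(\<Sum>i<n. (((J_mat n - B) *\<^sub>v x) $ i)\<^sup>2) = (\<Sum>i<n. (m - t i)\<^sup>2)"
    by (intro sum.cong refl) (simp add: e)
  also have "\<dots> = real n * m\<^sup>2 - 2 * m * (\<Sum>i<n. t i) + (\<Sum>i<n. (t i)\<^sup>2)"
    by (simp add: power2_diff sum.distrib sum_subtractf sum_distrib_left)
  also have "\<dots> = (\<Sum>i<n. (t i)\<^sup>2) - real n * m\<^sup>2" unfolding st by (simp add: power2_eq_square)
  also have "\<dots> \<le> (\<Sum>i<n. (t i)\<^sup>2)" by simp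
  also have "\<dots> \<le> (\<Sum>j<n. (x $ j)\<^sup>2)" unfolding t_def by (rule ds_contract[OF B x])
  finally show ?thesis .
qed

lemma diff_contract:
  assumes D: "D \<in> doubly_stochastic n" and B: "B \<in> doubly_stochastic n" and x: "x \<in> carrier_vec n"
  shows "(\<Sum>i<n. (((D - B) *\<^sub>v x) $ i)\<^sup>2) \<le> 4 * (\<Sum>j<n. (x $ j)\<^sup>2)"
proof -
  have Dc: "D \<in> carrier_mat n n" and Bc: "B \<in> carrier_mat n n" using ds_facts D B by auto
  have "(\<Sum>i<n. (((D - B) *\<^sub>v x) $ i)\<^sup>2) = (\<Sum>i<n. ((D *\<^sub>v x) $ i - (B *\<^sub>v x) $ i)\<^sup>2)"
    by (intro sum.cong refl) (use Dc Bc x in \<open>simp add: minus_mult_distrib_mat_vec[OF Dc Bc x]\<close>)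
  also have "\<dots> \<le> (\<Sum>i<n. 2 * ((D *\<^sub>v x) $ i)\<^sup>2 + 2 * ((B *\<^sub>v x) $ i)\<^sup>2)"
  proof (intro sum_mono)
    fix i
    have "0 \<le> ((D *\<^sub>v x) $ i + (B *\<^sub>v x) $ i)\<^sup>2" by simp
    then show "((D *\<^sub>v x) $ i - (B *\<^sub>v x) $ i)\<^sup>2 \<le> 2 * ((D *\<^sub>v x) $ i)\<^sup>2 + 2 * ((B *\<^sub>v x) $ i)\<^sup>2"
      by (simp add: power2_diff power2_sum)
  qed
  also have "\<dots> = 2 * (\<Sum>i<n. ((D *\<^sub>v x) $ i)\<^sup>2) + 2 * (\<Sum>i<n. ((B *\<^sub>v x) $ i)\<^sup>2)"
    by (simp add: sum.distrib sum_distrib_left)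
  also have "\<dots> \<le> 2 * (\<Sum>j<n. (x $ j)\<^sup>2) + 2 * (\<Sum>j<n. (x $ j)\<^sup>2)"
    using ds_contract[OF D x] ds_contract[OF B x] by linarith
  finally show ?thesis by simp
qed

lemma sum_drop_zero:
  fixes f :: "nat \<Rightarrow> real"
  assumes k: "k < n" and z: "f k = 0"
  shows "(\<Sum>i<n. f i) = (\<Sum>i\<in>{..<n} - {k}. f i)" and "card ({..<n} - {k}) = n - 1"
proof -
  show "(\<Sum>i<n. f i) = (\<Sum>i\<in>{..<n} - {k}. f i)"
    using sum.remove[of "{..<n}" k f] k z by simp
  show "card ({..<n} - {k}) = n - 1" using k by simp
qed

lemma UB:
  assumes B: "B \<in> doubly_stochastic n" and n1: "1 \<le> n" and p: "0 < p"
  shows "(\<Sum>s\<in>#singular_values (J_mat n - B). s powr p) \<le> real n - 1"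
proof -
  note Bf = ds_facts[OF B]
  have J: "J_mat n \<in> carrier_mat n n" by (simp add: J_mat_def)
  define A where "A = J_mat n - B"
  have A: "A \<in> carrier_mat n n" unfolding A_def using J Bf(1) by (metis minus_carrier_mat)
  obtain ws ls where ws: "length ws = n" "length ls = n" "set ws \<subseteq> carrier_vec n"
   "\<forall>i<n. \<forall>j<n. ws!i \<bullet> ws!j = (if i = j then 1 else 0)"
   "\<forall>i<n. ls!i = (A *\<^sub>v ws!i) \<bullet> (A *\<^sub>v ws!i)"
   "\<forall>p. (\<Sum>s\<in>#singular_values A. s powr p) = (\<Sum>i<n. sqrt (ls!i) powr p)"
   "A *\<^sub>v vec n (\<lambda>_. 1) = 0\<^sub>v n \<and> 1 \<le> n \<longrightarrow> (\<exists>k<n. ls!k = 0)"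
    using sv_struct[OF A] by blast
  have wsn: "\<And>j. j < n \<Longrightarrow> ws!j \<in> carrier_vec n" using ws(1,3) nth_mem by blast
  have lb: "\<And>i. i < n \<Longrightarrow> 0 \<le> ls!i \<and> ls!i \<le> 1"
  proof -
    fix i assume i: "i < n"
    have w: "ws!i \<in> carrier_vec n" by (rule wsn[OF i])
    have "ls!i = (\<Sum>a<n. ((A *\<^sub>v ws!i) $ a)\<^sup>2)" using ws(5) i dot_sq[of "A *\<^sub>v ws!i" n] A w by simp
    moreover have "(\<Sum>a<n. ((A *\<^sub>v ws!i) $ a)\<^sup>2) \<le> (\<Sum>j<n. (ws!i $ j)\<^sup>2)"
      unfolding A_def by (rule J_minus_contract[OF B n1 w])
    moreover have "(\<Sum>j<n. (ws!i $ j)\<^sup>2) = 1" using dot_sq[OF w] ws(4) i by simp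
    ultimately show "0 \<le> ls!i \<and> ls!i \<le> 1" by (simp add: sum_nonneg)
  qed
  have A1: "A *\<^sub>v vec n (\<lambda>_. 1) = 0\<^sub>v n"
  proof (rule eq_vecI)
    fix i assume "i < dim_vec (0\<^sub>v n :: real vec)"
    then have i: "i < n" by simp
    have "(A *\<^sub>v vec n (\<lambda>_. 1)) $ i = (\<Sum>j<n. A $$ (i,j) * 1)" using mv_idx[OF A _ i, of "vec n (\<lambda>_. 1)"] by simp
    also have "\<dots> = (\<Sum>j<n. 1 / real n - B $$ (i,j))" unfolding A_def using i Bf(1)
      by (intro sum.cong refl) (simp add: J_mat_def)
    also have "\<dots> = 0" using Bf(3)[OF i] n1 by (simp add: sum_subtractf)
    finally show "(A *\<^sub>v vec n (\<lambda>_. 1)) $ i = (0\<^sub>v n :: real vec) $ i" using i by simp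
  qed (use A in simp)
  obtain k where k: "k < n" "ls!k = 0" using ws(7) A1 n1 by blast
  have "(\<Sum>i<n. sqrt (ls!i) powr p) = (\<Sum>i\<in>{..<n} - {k}. sqrt (ls!i) powr p)"
    by (rule sum_drop_zero(1)[OF k(1)]) (simp add: k(2))
  also have "\<dots> \<le> of_nat (card ({..<n} - {k})) * 1"
  proof (rule sum_bounded_above)
    fix i assume "i \<in> {..<n} - {k}"
    then have "0 \<le> ls!i \<and> ls!i \<le> 1" using lb by auto
    then show "sqrt (ls!i) powr p \<le> 1" using p by (simp add: powr_le1)
  qed
  also have "\<dots> = real n - 1" using sum_drop_zero(2)[OF k(1), of "\<lambda>_. 0"] n1 by simp
  finally show ?thesis using ws(6) unfolding A_def by simp
qed

lemma bounded_sv: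
  assumes D: "D \<in> doubly_stochastic n" and B: "B \<in> doubly_stochastic n" and p: "0 < p"
  shows "(\<Sum>s\<in>#singular_values (D - B). s powr p) \<le> real n * 2 powr p"
proof -
  note Bf = ds_facts[OF B] and Df = ds_facts[OF D]
  define A where "A = D - B"
  have A: "A \<in> carrier_mat n n" unfolding A_def using Df(1) Bf(1) by (metis minus_carrier_mat)
  obtain ws ls where ws: "length ws = n" "length ls = n" "set ws \<subseteq> carrier_vec n"
   "\<forall>i<n. \<forall>j<n. ws!i \<bullet> ws!j = (if i = j then 1 else 0)"
   "\<forall>i<n. ls!i = (A *\<^sub>v ws!i) \<bullet> (A *\<^sub>v ws!i)"
   "\<forall>p. (\<Sum>s\<in>#singular_values A. s powr p) = (\<Sum>i<n. sqrt (ls!i) powr p)"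
    using sv_struct[OF A] by blast
  have wsn: "\<And>j. j < n \<Longrightarrow> ws!j \<in> carrier_vec n" using ws(1,3) nth_mem by blast
  have lb: "\<And>i. i < n \<Longrightarrow> 0 \<le> ls!i \<and> ls!i \<le> 4"
  proof -
    fix i assume i: "i < n"
    have w: "ws!i \<in> carrier_vec n" by (rule wsn[OF i])
    have "ls!i = (\<Sum>a<n. ((A *\<^sub>v ws!i) $ a)\<^sup>2)" using ws(5) i dot_sq[of "A *\<^sub>v ws!i" n] A w by simp
    moreover have "(\<Sum>a<n. ((A *\<^sub>v ws!i) $ a)\<^sup>2) \<le> 4 * (\<Sum>j<n. (ws!i $ j)\<^sup>2)"
      unfolding A_def by (rule diff_contract[OF D B w])
    moreover have "(\<Sum>j<n. (ws!i $ j)\<^sup>2) = 1" using dot_sq[OF w] ws(4) i by simp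
    ultimately show "0 \<le> ls!i \<and> ls!i \<le> 4" by (simp add: sum_nonneg)
  qed
  have "(\<Sum>i<n. sqrt (ls!i) powr p) \<le> of_nat (card {..<n}) * 2 powr p"
  proof (rule sum_bounded_above)
    fix i assume "i \<in> {..<n}"
    then have l: "0 \<le> ls!i \<and> ls!i \<le> 4" using lb by auto
    then have "sqrt (ls!i) \<le> sqrt 4" by (simp only: real_sqrt_le_iff)
    then have "sqrt (ls!i) \<le> 2" by simp
    then show "sqrt (ls!i) powr p \<le> 2 powr p" using p l by (intro powr_mono2) auto
  qed
  then show ?thesis using ws(6) unfolding A_def by simp
qed

definition Pm :: "(nat \<Rightarrow> nat) \<Rightarrow> nat \<Rightarrow> real mat" where
  "Pm \<sigma> n = mat n n (\<lambda>(i,j). if \<sigma> i = j then 1 else 0)"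

lemma perm_reindex:
  assumes s: "\<sigma> permutes {..<n}"
  shows "(\<Sum>i<n. h (\<sigma> i)) = (\<Sum>a<n. (h a :: real))"
  by (rule sum.reindex_bij_betw[OF permutes_imp_bij[OF s]])

lemma perm_lt: "\<sigma> permutes {..<n} \<Longrightarrow> i < n \<Longrightarrow> \<sigma> i < n"
  using permutes_in_image by fastforce

lemma delta_sum2:
  assumes "a < (n::nat)"
  shows "(\<Sum>j<n. (if a = j then 1 else 0) * (f j::real)) = f a"
proof -
  have "(\<Sum>j<n. (if a = j then 1 else 0) * f j) = (\<Sum>j<n. if a = j then f j else 0)"
    by (intro sum.cong refl) simp
  also have "\<dots> = f a" using assms sum.delta'[of "{..<n}" a f] by simp
  finally show ?thesis .
qed

lemma Pm_ds:
  assumes s: "\<sigma> permutes {..<n}"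
  shows "Pm \<sigma> n \<in> doubly_stochastic n"
proof -
  have rows: "\<And>i. i < n \<Longrightarrow> (\<Sum>j<n. Pm \<sigma> n $$ (i,j)) = 1"
  proof -
    fix i assume i: "i < n"
    have "(\<Sum>j<n. Pm \<sigma> n $$ (i,j)) = (\<Sum>j<n. (if \<sigma> i = j then 1 else 0) * 1)"
      unfolding Pm_def using i by (intro sum.cong refl) auto
    also have "\<dots> = 1" by (rule delta_sum2[OF perm_lt[OF s i]])
    finally show "(\<Sum>j<n. Pm \<sigma> n $$ (i,j)) = 1" .
  qed
  have cols: "\<And>j. j < n \<Longrightarrow> (\<Sum>i<n. Pm \<sigma> n $$ (i,j)) = 1"
  proof -
    fix j assume j: "j < n"
    have "(\<Sum>i<n. Pm \<sigma> n $$ (i,j)) = (\<Sum>i<n. (\<lambda>a. if a = j then 1 else 0) (\<sigma> i))"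
      unfolding Pm_def using j by (intro sum.cong refl) auto
    also have "\<dots> = (\<Sum>a<n. (if a = j then 1 else 0))" by (rule perm_reindex[OF s])
    also have "\<dots> = 1" using j by simp
    finally show "(\<Sum>i<n. Pm \<sigma> n $$ (i,j)) = 1" .
  qed
  show ?thesis unfolding doubly_stochastic_def using rows cols by (auto simp: Pm_def)
qed

lemma LB:
  assumes D: "D \<in> doubly_stochastic n" and n1: "1 \<le> n" and s: "\<sigma> permutes {..<n}" and p: "1 \<le> p"
  shows "real n - 1 + p * (1 - pval D n \<sigma>) \<le> (\<Sum>t\<in>#singular_values (D - Pm \<sigma> n). t powr p)"
proof -
  note Df = ds_facts[OF D]
  have Pc: "Pm \<sigma> n \<in> carrier_mat n n" by (simp add: Pm_def)
  define A where "A = D - Pm \<sigma> n"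
  have A: "A \<in> carrier_mat n n" unfolding A_def using Df(1) Pc by (metis minus_carrier_mat)
  obtain ws ls where ws: "length ws = n" "length ls = n" "set ws \<subseteq> carrier_vec n"
   "\<forall>i<n. \<forall>j<n. ws!i \<bullet> ws!j = (if i = j then 1 else 0)"
   "\<forall>a<n. \<forall>b<n. (\<Sum>i<n. ws!i $ a * ws!i $ b) = (if a = b then 1 else 0)"
   "\<forall>i<n. ls!i = (A *\<^sub>v ws!i) \<bullet> (A *\<^sub>v ws!i)"
   "\<forall>p. (\<Sum>s\<in>#singular_values A. s powr p) = (\<Sum>i<n. sqrt (ls!i) powr p)"
   "A *\<^sub>v vec n (\<lambda>_. 1) = 0\<^sub>v n \<and> 1 \<le> n \<longrightarrow> (\<exists>k<n. ls!k = 0)"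
    using sv_struct[OF A] by blast
  have wsn: "\<And>j. j < n \<Longrightarrow> ws!j \<in> carrier_vec n" using ws(1,3) nth_mem by blast
  have Ax: "\<And>(x::real vec) i. x \<in> carrier_vec n \<Longrightarrow> i < n \<Longrightarrow> (A *\<^sub>v x) $ i = (\<Sum>j<n. D $$ (i,j) * x $ j) - x $ (\<sigma> i)"
  proof -
    fix x :: "real vec" and i assume x: "x \<in> carrier_vec n" and i: "i < n"
    have "(A *\<^sub>v x) $ i = (\<Sum>j<n. A $$ (i,j) * x $ j)" by (rule mv_idx[OF A x i])
    also have "\<dots> = (\<Sum>j<n. D $$ (i,j) * x $ j - (if \<sigma> i = j then 1 else 0) * x $ j)"
      unfolding A_def using i Df(1) by (intro sum.cong refl) (auto simp: Pm_def left_diff_distrib)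
    also have "\<dots> = (\<Sum>j<n. D $$ (i,j) * x $ j) - x $ (\<sigma> i)"
      by (simp add: sum_subtractf delta_sum2[OF perm_lt[OF s i]])
    finally show "(A *\<^sub>v x) $ i = (\<Sum>j<n. D $$ (i,j) * x $ j) - x $ (\<sigma> i)" .
  qed
  define c where "c = pval D n \<sigma>"
  have each: "\<And>k. k < n \<Longrightarrow> (\<Sum>i<n. (ws!k $ (\<sigma> i))\<^sup>2) - (\<Sum>i<n. \<Sum>j<n. ws!k $ (\<sigma> i) * D $$ (i,j) * ws!k $ j) \<le> sqrt (ls!k)"
  proof -
    fix k assume k: "k < n"
    have w: "ws!k \<in> carrier_vec n" by (rule wsn[OF k])
    have f1: "(\<Sum>i<n. (- (ws!k $ (\<sigma> i)))\<^sup>2) = 1"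
    proof -
      have "(\<Sum>i<n. (- (ws!k $ (\<sigma> i)))\<^sup>2) = (\<Sum>i<n. (\<lambda>a. (ws!k $ a)\<^sup>2) (\<sigma> i))" by simp
      also have "\<dots> = (\<Sum>a<n. (ws!k $ a)\<^sup>2)" by (rule perm_reindex[OF s])
      also have "\<dots> = 1" using dot_sq[OF w] ws(4) k by simp
      finally show ?thesis .
    qed
    have "(\<Sum>i<n. (- (ws!k $ (\<sigma> i))) * (A *\<^sub>v ws!k) $ i) \<le> sqrt (\<Sum>i<n. ((A *\<^sub>v ws!k) $ i)\<^sup>2)"
      by (rule cs_aux[OF f1])
    also have "(\<Sum>i<n. ((A *\<^sub>v ws!k) $ i)\<^sup>2) = ls!k" using ws(6) k dot_sq[of "A *\<^sub>v ws!k" n] A w by simp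
    also have "(\<Sum>i<n. (- (ws!k $ (\<sigma> i))) * (A *\<^sub>v ws!k) $ i)
       = (\<Sum>i<n. (ws!k $ (\<sigma> i))\<^sup>2 - (\<Sum>j<n. ws!k $ (\<sigma> i) * D $$ (i,j) * ws!k $ j))"
    proof (intro sum.cong refl)
      fix i assume "i \<in> {..<n}"
      then have i: "i < n" by simp
      have "(- (ws!k $ (\<sigma> i))) * (A *\<^sub>v ws!k) $ i
          = (- (ws!k $ (\<sigma> i))) * ((\<Sum>j<n. D $$ (i,j) * ws!k $ j) - ws!k $ (\<sigma> i))"
        by (simp only: Ax[OF w i])
      also have "\<dots> = (ws!k $ (\<sigma> i))\<^sup>2 - (ws!k $ (\<sigma> i)) * (\<Sum>j<n. D $$ (i,j) * ws!k $ j)"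
        by (simp add: power2_eq_square right_diff_distrib)
      also have "\<dots> = (ws!k $ (\<sigma> i))\<^sup>2 - (\<Sum>j<n. ws!k $ (\<sigma> i) * D $$ (i,j) * ws!k $ j)"
        by (simp add: sum_distrib_left mult.assoc)
      finally show "(- (ws!k $ (\<sigma> i))) * (A *\<^sub>v ws!k) $ i
          = (ws!k $ (\<sigma> i))\<^sup>2 - (\<Sum>j<n. ws!k $ (\<sigma> i) * D $$ (i,j) * ws!k $ j)" .
    qed
    also have "\<dots> = (\<Sum>i<n. (ws!k $ (\<sigma> i))\<^sup>2) - (\<Sum>i<n. \<Sum>j<n. ws!k $ (\<sigma> i) * D $$ (i,j) * ws!k $ j)"
      by (simp add: sum_subtractf)
    finally show "(\<Sum>i<n. (ws!k $ (\<sigma> i))\<^sup>2) - (\<Sum>i<n. \<Sum>j<n. ws!k $ (\<sigma> i) * D $$ (i,j) * ws!k $ j) \<le> sqrt (ls!k)" .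
  qed
  have sum1: "(\<Sum>k<n. \<Sum>i<n. (ws!k $ (\<sigma> i))\<^sup>2) = real n"
  proof -
    have "(\<Sum>k<n. \<Sum>i<n. (ws!k $ (\<sigma> i))\<^sup>2) = (\<Sum>i<n. \<Sum>k<n. ws!k $ (\<sigma> i) * ws!k $ (\<sigma> i))"
      by (subst sum.swap) (simp add: power2_eq_square)
    also have "\<dots> = (\<Sum>i<n. (1::real))"
      by (intro sum.cong refl) (use ws(5) perm_lt[OF s] in auto)
    finally show ?thesis by simp
  qed
  have sum2: "(\<Sum>k<n. \<Sum>i<n. \<Sum>j<n. ws!k $ (\<sigma> i) * D $$ (i,j) * ws!k $ j) = c"
  proof -
    have "(\<Sum>k<n. \<Sum>i<n. \<Sum>j<n. ws!k $ (\<sigma> i) * D $$ (i,j) * ws!k $ j)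
        = (\<Sum>i<n. \<Sum>k<n. \<Sum>j<n. ws!k $ (\<sigma> i) * D $$ (i,j) * ws!k $ j)" by (rule sum.swap)
    also have "\<dots> = (\<Sum>i<n. \<Sum>j<n. \<Sum>k<n. ws!k $ (\<sigma> i) * D $$ (i,j) * ws!k $ j)"
      by (rule sum.cong[OF refl]) (rule sum.swap)
    also have "\<dots> = (\<Sum>i<n. \<Sum>j<n. D $$ (i,j) * (\<Sum>k<n. ws!k $ (\<sigma> i) * ws!k $ j))"
      by (intro sum.cong refl) (simp add: sum_distrib_left mult_ac)
    also have "\<dots> = (\<Sum>i<n. \<Sum>j<n. (if \<sigma> i = j then 1 else 0) * D $$ (i,j))"
      by (intro sum.cong refl) (use ws(5) perm_lt[OF s] in auto)
    also have "\<dots> = (\<Sum>i<n. D $$ (i, \<sigma> i))"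
      by (intro sum.cong refl) (rule delta_sum2[OF perm_lt[OF s]], simp)
    finally show ?thesis unfolding c_def pval_def .
  qed
  have S: "real n - c \<le> (\<Sum>k<n. sqrt (ls!k))"
  proof -
    have "(\<Sum>k<n. (\<Sum>i<n. (ws!k $ (\<sigma> i))\<^sup>2) - (\<Sum>i<n. \<Sum>j<n. ws!k $ (\<sigma> i) * D $$ (i,j) * ws!k $ j))
       \<le> (\<Sum>k<n. sqrt (ls!k))" by (rule sum_mono) (use each in auto)
    then show ?thesis by (simp add: sum_subtractf sum1 sum2)
  qed
  have A1: "A *\<^sub>v vec n (\<lambda>_. 1) = 0\<^sub>v n"
  proof (rule eq_vecI)
    fix i assume "i < dim_vec (0\<^sub>v n :: real vec)"
    then have i: "i < n" by simp
    have "(A *\<^sub>v vec n (\<lambda>_. 1)) $ i = (\<Sum>j<n. D $$ (i,j)) - 1"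
      using Ax[OF _ i, of "vec n (\<lambda>_. 1)"] perm_lt[OF s i] by simp
    then show "(A *\<^sub>v vec n (\<lambda>_. 1)) $ i = (0\<^sub>v n :: real vec) $ i" using i Df(3)[OF i] by simp
  qed (use A in simp)
  obtain k0 where k0: "k0 < n" "ls!k0 = 0" using ws(8) A1 n1 by blast
  have lnn: "\<And>i. i < n \<Longrightarrow> 0 \<le> ls!i"
  proof -
    fix i assume i: "i < n"
    have w: "ws!i \<in> carrier_vec n" by (rule wsn[OF i])
    have "ls!i = (\<Sum>a<n. ((A *\<^sub>v ws!i) $ a)\<^sup>2)" using ws(6) i dot_sq[of "A *\<^sub>v ws!i" n] A w by simp
    then show "0 \<le> ls!i" by (simp add: sum_nonneg)
  qed
  let ?K = "{..<n} - {k0}"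
  have "(\<Sum>i<n. sqrt (ls!i) powr p) = (\<Sum>i\<in>?K. sqrt (ls!i) powr p)"
    by (rule sum_drop_zero(1)[OF k0(1)]) (simp add: k0(2))
  also have "\<dots> \<ge> (\<Sum>i\<in>?K. 1 + p * (sqrt (ls!i) - 1))"
    by (rule sum_mono) (use lnn p in \<open>auto intro!: tangent_powr\<close>)
  finally have T1: "(\<Sum>i\<in>?K. 1 + p * (sqrt (ls!i) - 1)) \<le> (\<Sum>i<n. sqrt (ls!i) powr p)" .
  have ck: "card ?K = n - 1" by (rule sum_drop_zero(2)[OF k0(1), of "\<lambda>_. 0"]) simp
  have sK: "(\<Sum>i\<in>?K. sqrt (ls!i)) = (\<Sum>i<n. sqrt (ls!i))"
    by (rule sum_drop_zero(1)[OF k0(1), symmetric]) (simp add: k0(2))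
  have "(\<Sum>i\<in>?K. 1 + p * (sqrt (ls!i) - 1)) = real (n - 1) + p * ((\<Sum>i<n. sqrt (ls!i)) - real (n - 1))"
    by (simp add: sum.distrib sum_subtractf sum_distrib_left[symmetric] right_diff_distrib ck sK)
  also have "\<dots> \<ge> real (n - 1) + p * (1 - c)"
  proof -
    have "1 - c \<le> (\<Sum>i<n. sqrt (ls!i)) - real (n - 1)" using S n1 by (simp add: of_nat_diff)
    then show ?thesis using p by (simp add: mult_left_mono)
  qed
  finally have "real (n - 1) + p * (1 - c) \<le> (\<Sum>i<n. sqrt (ls!i) powr p)" using T1 by linarith
  then show ?thesis using ws(7) n1 unfolding A_def c_def by (simp add: of_nat_diff)
qed

lemma J_ds: assumes n1: "1 \<le> n" shows "J_mat n \<in> doubly_stochastic n"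
  unfolding doubly_stochastic_def J_mat_def using n1 by auto

lemma S_nonneg0: "0 \<le> (\<Sum>s\<in>#(M::real multiset). s powr p)"
  by (induct M) auto

lemma S_nonneg: "0 \<le> (\<Sum>s\<in>#singular_values A. s powr p)"
  by (rule S_nonneg0)

theorem mainTheorem9:
  fixes n :: nat and p :: real
  assumes "n \<ge> 1" and "1 \<le> p"
  shows "J_mat n \<in> doubly_stochastic n
    \<and> (\<forall>D\<in>doubly_stochastic n. cheb_dist n p (J_mat n) \<le> cheb_dist n p D)
    \<and> (\<forall>D\<in>doubly_stochastic n. cheb_dist n p D \<le> cheb_dist n p (J_mat n) \<longrightarrow> D = J_mat n)
    \<and> (INF D\<in>doubly_stochastic n. cheb_dist n p D) = (real n - 1) powr (1 / p)"
proof -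
  have n1: "1 \<le> n" using assms(1) by simp
  have p: "1 \<le> p" by (rule assms(2))
  have p0: "0 < p" using p by simp
  let ?O = "doubly_stochastic n"
  let ?S = "\<lambda>A. (\<Sum>s\<in>#singular_values A. s powr p)"
  define r where "r = (real n - 1) powr (1 / p)"
  have J: "J_mat n \<in> ?O" by (rule J_ds[OF n1])
  have ne: "?O \<noteq> {}" using J by blast
  have sn: "\<And>A. schatten_norm p A = ?S A powr (1 / p)" unfolding schatten_norm_def by simp
  have bdd: "\<And>D. D \<in> ?O \<Longrightarrow> bdd_above ((\<lambda>B. schatten_norm p (D - B)) ` ?O)"
  proof -
    fix D assume D: "D \<in> ?O"
    show "bdd_above ((\<lambda>B. schatten_norm p (D - B)) ` ?O)"
    proof (rule bdd_aboveI2)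
      fix B assume B: "B \<in> ?O"
      show "schatten_norm p (D - B) \<le> (real n * 2 powr p) powr (1 / p)"
        unfolding sn using bounded_sv[OF D B p0] S_nonneg p0 by (intro powr_mono2) auto
    qed
  qed
  have cheb_ge: "\<And>D B. D \<in> ?O \<Longrightarrow> B \<in> ?O \<Longrightarrow> schatten_norm p (D - B) \<le> cheb_dist n p D"
    unfolding cheb_dist_def by (rule cSUP_upper) (auto intro: bdd)
  have lower: "\<And>D. D \<in> ?O \<Longrightarrow> r \<le> cheb_dist n p D \<and> (D \<noteq> J_mat n \<longrightarrow> r < cheb_dist n p D)"
  proof -
    fix D assume D: "D \<in> ?O"
    obtain \<sigma> where s: "\<sigma> permutes {..<n}" "pval D n \<sigma> \<le> 1" "D \<noteq> J_mat n \<longrightarrow> pval D n \<sigma> < 1"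
      using exists_perm[OF D n1] by blast
    have P: "Pm \<sigma> n \<in> ?O" by (rule Pm_ds[OF s(1)])
    have lb: "real n - 1 + p * (1 - pval D n \<sigma>) \<le> ?S (D - Pm \<sigma> n)" by (rule LB[OF D n1 s(1) p])
    have n0: "0 \<le> real n - 1" using n1 by simp
    have a: "real n - 1 \<le> real n - 1 + p * (1 - pval D n \<sigma>)" using s(2) p0 by simp
    have "r \<le> (real n - 1 + p * (1 - pval D n \<sigma>)) powr (1 / p)"
      unfolding r_def using a n0 p0 by (intro powr_mono2) auto
    also have "\<dots> \<le> schatten_norm p (D - Pm \<sigma> n)"
      unfolding sn using lb a n0 p0 by (intro powr_mono2) auto
    also have "\<dots> \<le> cheb_dist n p D" by (rule cheb_ge[OF D P])
    finally have ge: "r \<le> cheb_dist n p D" .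
    have "D \<noteq> J_mat n \<longrightarrow> r < cheb_dist n p D"
    proof
      assume "D \<noteq> J_mat n"
      then have "pval D n \<sigma> < 1" using s(3) by simp
      then have a': "real n - 1 < real n - 1 + p * (1 - pval D n \<sigma>)" using p0 by simp
      have "r < (real n - 1 + p * (1 - pval D n \<sigma>)) powr (1 / p)"
        unfolding r_def using a' n0 p0 by (intro powr_less_mono2) auto
      also have "\<dots> \<le> schatten_norm p (D - Pm \<sigma> n)"
        unfolding sn using lb a n0 p0 by (intro powr_mono2) auto
      also have "\<dots> \<le> cheb_dist n p D" by (rule cheb_ge[OF D P])
      finally show "r < cheb_dist n p D" .
    qed
    with ge show "r \<le> cheb_dist n p D \<and> (D \<noteq> J_mat n \<longrightarrow> r < cheb_dist n p D)" by blast
  qed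
  have upper: "cheb_dist n p (J_mat n) \<le> r"
    unfolding cheb_dist_def
  proof (rule cSUP_least[OF ne])
    fix B assume B: "B \<in> ?O"
    show "schatten_norm p (J_mat n - B) \<le> r"
      unfolding sn r_def using UB[OF B n1 p0] S_nonneg p0 by (intro powr_mono2) auto
  qed
  have cJ: "cheb_dist n p (J_mat n) = r" using upper lower[OF J] by simp
  have c2: "\<forall>D\<in>?O. cheb_dist n p (J_mat n) \<le> cheb_dist n p D" using cJ lower by simp
  have c3: "\<forall>D\<in>?O. cheb_dist n p D \<le> cheb_dist n p (J_mat n) \<longrightarrow> D = J_mat n"
    using cJ lower by fastforce
  have c4: "(INF D\<in>?O. cheb_dist n p D) = r"
  proof (rule antisym)
    have bb: "bdd_below ((\<lambda>D. cheb_dist n p D) ` ?O)"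
      by (rule bdd_belowI2[of _ r]) (use lower in blast)
    show "(INF D\<in>?O. cheb_dist n p D) \<le> r"
      using cINF_lower[OF bb J] cJ by simp
    show "r \<le> (INF D\<in>?O. cheb_dist n p D)"
      by (rule cINF_greatest[OF ne]) (use lower in blast)
  qed
  show ?thesis using J c2 c3 c4 unfolding r_def by blast
qed

end
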